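(* Let $\mathbb{K}$ be an algebraically closed field of characteristic $p$, with $p=0$ or $p\ge5$. Let $G$ be a finite group containing a normal subgroup $H$ of order $n\ge3$. Assume that $G$ is realized by a dual $3$-net $(\Lambda_1,\Lambda_2,\Lambda_3)$ in $PG(2,\mathbb{K})$ (with $|G|<p$ if $p>0$) via bijections $\alpha,\beta,\gamma$, and that every dual $3$-subnet of $(\Lambda_1,\Lambda_2,\Lambda_3)$ realizing $H$ as a subgroup of $G$ is triangular. Then $H$ is cyclic and $(\Lambda_1,\Lambda_2,\Lambda_3)$ is either triangular or of tetrahedron type.
   Context: A dual $3$-net of order $N$ in $PG(2,\mathbb{K})$ is a triple $(\Lambda_1,\Lambda_2,\Lambda_3)$ of pairwise disjoint point sets, each of size $N$, such that every line meeting two distinct components meets each component in exactly one point. It realizes $(G,\cdot)$ via bijections $\alpha:G\to\Lambda_1$, $\beta:G\to\Lambda_2$, $\gamma:G\to\Lambda_3$ if $a\cdot b=c$ iff $\alpha(a),\beta(b),\gamma(c)$ are collinear. For $H$ normal in $G$, the dual $3$-subnets realizing $H$ as a subgroup of $G$ are the triples $(\alpha(g_1H),\beta(g_2H),\gamma(g_1g_2H))$ for $g_1,g_2\in G$. A dual $3$-net (of order $\ge 3$ here) is triangular if its three components lie respectively on the three sides of a triangle. A dual $3$-net $(\Lambda_1,\Lambda_2,\Lambda_3)$ of order $2m$ is of tetrahedron type if it contains a dual $3$-subnet $(\Gamma_1,\Gamma_2,\Gamma_3)$ of order $m$ with $\Gamma_i\subset\Lambda_i$ and, setting $\Delta_i=\Lambda_i\setminus\Gamma_i$,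 the six sets $\Gamma_i,\Delta_i$ lie on the six sides of a non-degenerate quadrangle, with $\Gamma_i$ and $\Delta_i$ on opposite sides (sides sharing no vertex) for each $i$. *)

theory Defs
  imports "HOL-Computational_Algebra.Polynomial" "HOL-Algebra.Coset" "HOL-Algebra.Elementary_Groups"
begin

text \<open>The projective plane PG(2,K): a point is the set of nonzero scalar
multiples of a nonzero vector of K^3 (vectors are triples).\<close>

type_synonym 'k vec3 = "'k \<times> 'k \<times> 'k"
type_synonym 'k ppoint = "'k vec3 set"

definition scale3 :: "'k::field \<Rightarrow> 'k vec3 \<Rightarrow> 'k vec3" where
  "scale3 c v = (case v of (a, b, d) \<Rightarrow> (c * a, c * b, c * d))"

definition proj_pt :: "'k::field vec3 \<Rightarrow> 'k ppoint" where
  "proj_pt v = {scale3 c v | c. c \<noteq> 0}"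

definition is_point :: "'k::field ppoint \<Rightarrow> bool" where
  "is_point P \<longleftrightarrow> (\<exists>v. v \<noteq> (0, 0, 0) \<and> P = proj_pt v)"

definition dot3 :: "'k::field vec3 \<Rightarrow> 'k vec3 \<Rightarrow> 'k" where
  "dot3 u v = (case u of (a1, a2, a3) \<Rightarrow> case v of (b1, b2, b3) \<Rightarrow> a1 * b1 + a2 * b2 + a3 * b3)"

definition det3 :: "'k::field vec3 \<Rightarrow> 'k vec3 \<Rightarrow> 'k vec3 \<Rightarrow> 'k" where
  "det3 u v w = (case u of (a1, a2, a3) \<Rightarrow> case v of (b1, b2, b3) \<Rightarrow> case w of (c1, c2, c3) \<Rightarrow>
      a1 * (b2 * c3 - b3 * c2) - a2 * (b1 * c3 - b3 * c1) + a3 * (b1 * c2 - b2 * c1))"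

text \<open>Three points are collinear iff (some, equivalently all) representatives are linearly dependent.\<close>
definition pcollinear :: "'k::field ppoint \<Rightarrow> 'k ppoint \<Rightarrow> 'k ppoint \<Rightarrow> bool" where
  "pcollinear P Q R \<longleftrightarrow> (\<exists>u\<in>P. \<exists>v\<in>Q. \<exists>w\<in>R. det3 u v w = 0)"

definition is_line :: "'k::field ppoint set \<Rightarrow> bool" where
  "is_line L \<longleftrightarrow> (\<exists>a. a \<noteq> (0, 0, 0) \<and> L = {P. is_point P \<and> (\<forall>v\<in>P. dot3 a v = 0)})"

definition line_thru :: "'k::field ppoint \<Rightarrow> 'k ppoint \<Rightarrow> 'k ppoint set" where
  "line_thru P Q = {R. is_point R \<and> pcollinear P Q R}"

definition dual_3net :: "nat \<Rightarrow> 'k::field ppoint set \<Rightarrow> 'k ppoint set \<Rightarrow> 'k ppoint set \<Rightarrow> bool" where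
  "dual_3net N L1 L2 L3 \<longleftrightarrow>
     (\<forall>i<3. Ball ([L1, L2, L3] ! i) is_point \<and> finite ([L1, L2, L3] ! i) \<and> card ([L1, L2, L3] ! i) = N) \<and>
     (\<forall>i<3. \<forall>j<3. i \<noteq> j \<longrightarrow> [L1, L2, L3] ! i \<inter> [L1, L2, L3] ! j = {}) \<and>
     (\<forall>L. is_line L \<longrightarrow>
        (\<exists>i<3. \<exists>j<3. i \<noteq> j \<and> L \<inter> [L1, L2, L3] ! i \<noteq> {} \<and> L \<inter> [L1, L2, L3] ! j \<noteq> {}) \<longrightarrow>
        (\<forall>k<3. card (L \<inter> [L1, L2, L3] ! k) = 1))"

definition realizes ::
  "('g, 'b) monoid_scheme \<Rightarrow> 'k::field ppoint set \<Rightarrow> 'k ppoint set \<Rightarrow> 'k ppoint set \<Rightarrow>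
   ('g \<Rightarrow> 'k ppoint) \<Rightarrow> ('g \<Rightarrow> 'k ppoint) \<Rightarrow> ('g \<Rightarrow> 'k ppoint) \<Rightarrow> bool" where
  "realizes G L1 L2 L3 \<alpha> \<beta> \<gamma> \<longleftrightarrow>
     bij_betw \<alpha> (carrier G) L1 \<and> bij_betw \<beta> (carrier G) L2 \<and> bij_betw \<gamma> (carrier G) L3 \<and>
     (\<forall>a\<in>carrier G. \<forall>b\<in>carrier G. \<forall>c\<in>carrier G.
        a \<otimes>\<^bsub>G\<^esub> b = c \<longleftrightarrow> pcollinear (\<alpha> a) (\<beta> b) (\<gamma> c))"

definition triangular :: "'k::field ppoint set \<Rightarrow> 'k ppoint set \<Rightarrow> 'k ppoint set \<Rightarrow> bool" where
  "triangular L1 L2 L3 \<longleftrightarrow>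
     (\<exists>A B C. is_point A \<and> is_point B \<and> is_point C \<and> \<not> pcollinear A B C \<and>
        L1 \<subseteq> line_thru B C \<and> L2 \<subseteq> line_thru A C \<and> L3 \<subseteq> line_thru A B)"

definition nondeg_quadrangle :: "'k::field ppoint \<Rightarrow> 'k ppoint \<Rightarrow> 'k ppoint \<Rightarrow> 'k ppoint \<Rightarrow> bool" where
  "nondeg_quadrangle A B C D \<longleftrightarrow> is_point A \<and> is_point B \<and> is_point C \<and> is_point D \<and>
     \<not> pcollinear A B C \<and> \<not> pcollinear A B D \<and> \<not> pcollinear A C D \<and> \<not> pcollinear B C D"

definition opposite_sides :: "'k::field ppoint \<Rightarrow> 'k ppoint \<Rightarrow> 'k ppoint \<Rightarrow> 'k ppoint \<Rightarrow>
    ('k ppoint set \<times> 'k ppoint set) set" where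
  "opposite_sides A B C D =
     {(line_thru A B, line_thru C D), (line_thru C D, line_thru A B),
      (line_thru A C, line_thru B D), (line_thru B D, line_thru A C),
      (line_thru A D, line_thru B C), (line_thru B C, line_thru A D)}"

definition tetrahedron_type :: "'k::field ppoint set \<Rightarrow> 'k ppoint set \<Rightarrow> 'k ppoint set \<Rightarrow> bool" where
  "tetrahedron_type L1 L2 L3 \<longleftrightarrow>
     (\<exists>m. dual_3net (2 * m) L1 L2 L3 \<and>
       (\<exists>\<Gamma>1 \<Gamma>2 \<Gamma>3. \<Gamma>1 \<subseteq> L1 \<and> \<Gamma>2 \<subseteq> L2 \<and> \<Gamma>3 \<subseteq> L3 \<and> dual_3net m \<Gamma>1 \<Gamma>2 \<Gamma>3 \<and>
         (\<exists>A B C D. nondeg_quadrangle A B C D \<and>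
           (\<exists>S1 T1 S2 T2 S3 T3.
              (S1, T1) \<in> opposite_sides A B C D \<and> (S2, T2) \<in> opposite_sides A B C D \<and>
              (S3, T3) \<in> opposite_sides A B C D \<and> card {S1, T1, S2, T2, S3, T3} = 6 \<and>
              \<Gamma>1 \<subseteq> S1 \<and> L1 - \<Gamma>1 \<subseteq> T1 \<and> \<Gamma>2 \<subseteq> S2 \<and> L2 - \<Gamma>2 \<subseteq> T2 \<and>
              \<Gamma>3 \<subseteq> S3 \<and> L3 - \<Gamma>3 \<subseteq> T3))))"

end

theory Submission
  imports Defs "HOL-Algebra.Multiplicative_Group"
begin

definition vadd :: "'k::field vec3 \<Rightarrow> 'k vec3 \<Rightarrow> 'k vec3" where
  "vadd u v = (case u of (a1,a2,a3) \<Rightarrow> case v of (b1,b2,b3) \<Rightarrow> (a1+b1, a2+b2, a3+b3))"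

definition cross3 :: "'k::field vec3 \<Rightarrow> 'k vec3 \<Rightarrow> 'k vec3" where
  "cross3 u v = (case u of (a1,a2,a3) \<Rightarrow> case v of (b1,b2,b3) \<Rightarrow>
     (a2*b3 - a3*b2, a3*b1 - a1*b3, a1*b2 - a2*b1))"

lemma det3_dot: "det3 u v w = dot3 u (cross3 v w)"
  by (cases u rule: prod_cases3; cases v rule: prod_cases3; cases w rule: prod_cases3)
     (simp add: det3_def dot3_def cross3_def algebra_simps)

lemma det3_scale: "det3 (scale3 a u) (scale3 b v) (scale3 c w) = a*b*c*det3 u v w"
  by (cases u rule: prod_cases3; cases v rule: prod_cases3; cases w rule: prod_cases3)
     (simp add: det3_def scale3_def algebra_simps)

lemma det3_cyc: "det3 u v w = det3 v w u"
  by (cases u rule: prod_cases3; cases v rule: prod_cases3; cases w rule: prod_cases3)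
     (simp add: det3_def algebra_simps)

lemma det3_swap12: "det3 v u w = - det3 u v w"
  by (cases u rule: prod_cases3; cases v rule: prod_cases3; cases w rule: prod_cases3)
     (simp add: det3_def algebra_simps)

lemma det3_swap23: "det3 u w v = - det3 u v w"
  by (cases u rule: prod_cases3; cases v rule: prod_cases3; cases w rule: prod_cases3)
     (simp add: det3_def algebra_simps)

lemma det3_rep12: "det3 u u w = 0"
  by (cases u rule: prod_cases3; cases w rule: prod_cases3) (simp add: det3_def algebra_simps)
lemma det3_rep13: "det3 u w u = 0"
  by (cases u rule: prod_cases3; cases w rule: prod_cases3) (simp add: det3_def algebra_simps)
lemma det3_rep23: "det3 w u u = 0"
  by (cases u rule: prod_cases3; cases w rule: prod_cases3) (simp add: det3_def algebra_simps)

lemma cramer3: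
  "scale3 (det3 p q r) x =
     vadd (vadd (scale3 (det3 x q r) p) (scale3 (det3 p x r) q)) (scale3 (det3 p q x) r)"
  by (cases p rule: prod_cases3; cases q rule: prod_cases3; cases r rule: prod_cases3; cases x rule: prod_cases3)
     (simp add: det3_def scale3_def vadd_def algebra_simps)

lemma det3_tri:
  "det3 (vadd q (scale3 s r)) (vadd r (scale3 t p)) (vadd p (scale3 u q)) = (1 + s*t*u) * det3 p q r"
  by (cases p rule: prod_cases3; cases q rule: prod_cases3; cases r rule: prod_cases3)
     (simp add: det3_def scale3_def vadd_def algebra_simps)

lemma det3_lin3:
  "det3 u v (vadd (scale3 a x) (scale3 b y)) = a * det3 u v x + b * det3 u v y"
  by (cases u rule: prod_cases3; cases v rule: prod_cases3; cases x rule: prod_cases3; cases y rule: prod_cases3)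
     (simp add: det3_def scale3_def vadd_def algebra_simps)

lemma cross_cross: "cross3 (cross3 p q) a = vadd (scale3 (dot3 p a) q) (scale3 (- dot3 q a) p)"
  by (cases p rule: prod_cases3; cases q rule: prod_cases3; cases a rule: prod_cases3)
     (simp add: dot3_def cross3_def scale3_def vadd_def algebra_simps)

lemma scale3_0 [simp]: "scale3 c (0,0,0) = (0,0,0)" by (simp add: scale3_def)
lemma scale3_1 [simp]: "scale3 1 v = v" by (cases v rule: prod_cases3) (simp add: scale3_def)
lemma scale3_scale3 [simp]: "scale3 a (scale3 b v) = scale3 (a*b) v"
  by (cases v rule: prod_cases3) (simp add: scale3_def)
lemma scale3_eq0: "scale3 c v = (0,0,0) \<longleftrightarrow> c = 0 \<or> v = (0,0,0)"
  by (cases v rule: prod_cases3) (auto simp add: scale3_def)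

lemma cross_zero_dep:
  fixes p q :: "'k::field vec3"
  assumes "cross3 p q = (0,0,0)" "p \<noteq> (0,0,0)"
  shows "\<exists>k. q = scale3 k p"
proof -
  obtain p1 p2 p3 where p: "p = (p1,p2,p3)" by (cases p rule: prod_cases3)
  obtain q1 q2 q3 where q: "q = (q1,q2,q3)" by (cases q rule: prod_cases3)
  have e: "p2*q3 = p3*q2" "p3*q1 = p1*q3" "p1*q2 = p2*q1" using assms(1) by (simp_all add: p q cross3_def)
  show ?thesis
  proof (cases "p1 \<noteq> 0")
    case True
    show ?thesis
      by (rule exI[of _ "q1/p1"]) (use True e in \<open>simp add: p q scale3_def field_simps\<close>)
  next
    case F1: False
    show ?thesis
    proof (cases "p2 \<noteq> 0")
      case True
      show ?thesis
        by (rule exI[of _ "q2/p2"]) (use True F1 e in \<open>simp add: p q scale3_def field_simps\<close>)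
    next
      case False
      with F1 assms(2) have "p3 \<noteq> 0" by (simp add: p)
      then show ?thesis
        by (intro exI[of _ "q3/p3"]) (use False F1 e in \<open>simp add: p q scale3_def field_simps\<close>)
    qed
  qed
qed

lemma proj_pt_iff: "w \<in> proj_pt v \<longleftrightarrow> (\<exists>c. c \<noteq> 0 \<and> w = scale3 c v)"
  by (auto simp: proj_pt_def)

lemma proj_pt_mem: "v \<in> proj_pt v"
  by (auto simp: proj_pt_iff intro!: exI[of _ 1])

lemma proj_pt_eq_scale: "c \<noteq> 0 \<Longrightarrow> proj_pt (scale3 c v) = proj_pt v"
  apply (auto simp: proj_pt_iff)
   apply (rule_tac x="ca*c" in exI, simp)
  apply (rule_tac x="ca/c" in exI, simp)
  done

lemma proj_pt_eq_iff:
  assumes "v \<noteq> (0,0,0)"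
  shows "proj_pt v = proj_pt w \<longleftrightarrow> (\<exists>c. c \<noteq> 0 \<and> w = scale3 c v)"
proof
  assume "proj_pt v = proj_pt w"
  then have "w \<in> proj_pt v" using proj_pt_mem by metis
  then show "\<exists>c. c \<noteq> 0 \<and> w = scale3 c v" by (simp add: proj_pt_iff)
next
  assume "\<exists>c. c \<noteq> 0 \<and> w = scale3 c v"
  then show "proj_pt v = proj_pt w" using proj_pt_eq_scale by metis
qed

lemma proj_pt_nonzero: "v \<noteq> (0,0,0) \<Longrightarrow> w \<in> proj_pt v \<Longrightarrow> w \<noteq> (0,0,0)"
  by (auto simp: proj_pt_iff scale3_eq0)

lemma is_point_proj: "v \<noteq> (0,0,0) \<Longrightarrow> is_point (proj_pt v)"
  unfolding is_point_def by blast

definition rep :: "'k::field ppoint \<Rightarrow> 'k vec3" where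
  "rep P = (SOME v. v \<noteq> (0,0,0) \<and> P = proj_pt v)"

lemma rep: "is_point P \<Longrightarrow> rep P \<noteq> (0,0,0) \<and> P = proj_pt (rep P)"
  unfolding rep_def is_point_def by (rule someI_ex) auto

lemma pcollinear_proj: "pcollinear (proj_pt u) (proj_pt v) (proj_pt w) \<longleftrightarrow> det3 u v w = 0"
proof
  assume "pcollinear (proj_pt u) (proj_pt v) (proj_pt w)"
  then obtain a b c where "a \<noteq> 0" "b \<noteq> 0" "c \<noteq> 0" "det3 (scale3 a u) (scale3 b v) (scale3 c w) = 0"
    by (auto simp: pcollinear_def proj_pt_iff)
  then show "det3 u v w = 0" by (simp add: det3_scale)
next
  assume "det3 u v w = 0"
  then show "pcollinear (proj_pt u) (proj_pt v) (proj_pt w)"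
    unfolding pcollinear_def using proj_pt_mem by blast
qed


lemma pcollinear_12': "pcollinear P Q R \<Longrightarrow> pcollinear Q P R"
proof -
  assume "pcollinear P Q R"
  then obtain u v w where "u \<in> P" "v \<in> Q" "w \<in> R" "det3 u v w = 0" unfolding pcollinear_def by blast
  moreover have "det3 v u w = - det3 u v w" by (rule det3_swap12)
  ultimately show ?thesis unfolding pcollinear_def by force
qed
lemma pcollinear_23': "pcollinear P Q R \<Longrightarrow> pcollinear P R Q"
proof -
  assume "pcollinear P Q R"
  then obtain u v w where "u \<in> P" "v \<in> Q" "w \<in> R" "det3 u v w = 0" unfolding pcollinear_def by blast
  moreover have "det3 u w v = - det3 u v w" by (rule det3_swap23)
  ultimately show ?thesis unfolding pcollinear_def by force
qed
lemma pcollinear_12: "pcollinear P Q R \<longleftrightarrow> pcollinear Q P R"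
  using pcollinear_12'[of P Q R] pcollinear_12'[of Q P R] by (rule iffI)
lemma pcollinear_23: "pcollinear P Q R \<longleftrightarrow> pcollinear P R Q"
  using pcollinear_23'[of P Q R] pcollinear_23'[of P R Q] by (rule iffI)
lemma pcollinear_cyc: "pcollinear P Q R \<longleftrightarrow> pcollinear Q R P"
  by (simp only: pcollinear_12[of P Q R] pcollinear_23[of Q P R])

lemma line_thru_sym: "line_thru P Q = line_thru Q P"
  unfolding line_thru_def by (simp only: pcollinear_12[of P Q])

lemma proj_rep_eq: "is_point P \<Longrightarrow> proj_pt (rep P) = P" using rep[of P] by simp

lemma pcollinear_points:
  assumes "is_point P" "is_point Q" "is_point R"
  shows "pcollinear P Q R \<longleftrightarrow> det3 (rep P) (rep Q) (rep R) = 0"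
  using pcollinear_proj[of "rep P" "rep Q" "rep R"] assms by (simp add: proj_rep_eq)

lemma line_thru_mem1: "is_point Q \<Longrightarrow> is_point R \<Longrightarrow> Q \<in> line_thru Q R"
  unfolding line_thru_def by (simp add: pcollinear_points det3_rep13)
lemma line_thru_mem2: "is_point Q \<Longrightarrow> is_point R \<Longrightarrow> R \<in> line_thru Q R"
  unfolding line_thru_def by (simp add: pcollinear_points det3_rep23)

lemma cross_nonzero_if_distinct:
  assumes "b \<noteq> (0,0,0)" "c \<noteq> (0,0,0)" "proj_pt b \<noteq> proj_pt c"
  shows "cross3 b c \<noteq> (0,0,0)"
proof
  assume "cross3 b c = (0,0,0)"
  then obtain k where k: "c = scale3 k b" using cross_zero_dep assms(1) by blast
  with assms(2) have "k \<noteq> 0" by (auto simp: scale3_eq0)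
  then have "proj_pt c = proj_pt b" using k proj_pt_eq_scale by simp
  then show False using assms(3) by simp
qed

lemma dot3_scale: "dot3 a (scale3 c v) = c * dot3 a v"
  by (cases a rule: prod_cases3; cases v rule: prod_cases3) (simp add: dot3_def scale3_def algebra_simps)

lemma dot3_scale_l: "dot3 (scale3 c v) a = c * dot3 v a"
  by (cases a rule: prod_cases3; cases v rule: prod_cases3) (simp add: dot3_def scale3_def algebra_simps)

lemma dot3_comm: "dot3 a b = dot3 b a"
  by (cases a rule: prod_cases3; cases b rule: prod_cases3) (simp add: dot3_def algebra_simps)

lemma det3_dot': "det3 b c v = dot3 (cross3 b c) v"
  by (cases b rule: prod_cases3; cases v rule: prod_cases3; cases c rule: prod_cases3)
     (simp add: det3_def dot3_def cross3_def algebra_simps)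

lemma is_line_line_thru:
  assumes "is_point B" "is_point C" "B \<noteq> C"
  shows "is_line (line_thru B C)"
proof -
  let ?b = "rep B" and ?c = "rep C"
  have b: "?b \<noteq> (0,0,0)" "B = proj_pt ?b" and c: "?c \<noteq> (0,0,0)" "C = proj_pt ?c"
    using rep assms by blast+
  have nz: "cross3 ?b ?c \<noteq> (0,0,0)" using cross_nonzero_if_distinct b c assms(3) by metis
  have "line_thru B C = {P. is_point P \<and> (\<forall>v\<in>P. dot3 (cross3 ?b ?c) v = 0)}"
  proof (intro equalityI subsetI)
    fix P assume "P \<in> line_thru B C"
    then have P: "is_point P" "pcollinear B C P" by (auto simp: line_thru_def)
    obtain p where p: "p \<noteq> (0,0,0)" "P = proj_pt p" using P(1) is_point_def by blast
    have "det3 ?b ?c p = 0" using P(2) b c p pcollinear_proj by metis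
    then have "\<forall>v\<in>P. dot3 (cross3 ?b ?c) v = 0"
      using p by (auto simp: proj_pt_iff dot3_scale det3_dot')
    then show "P \<in> {P. is_point P \<and> (\<forall>v\<in>P. dot3 (cross3 ?b ?c) v = 0)}" using P by blast
  next
    fix P assume "P \<in> {P. is_point P \<and> (\<forall>v\<in>P. dot3 (cross3 ?b ?c) v = 0)}"
    then have P: "is_point P" "\<forall>v\<in>P. dot3 (cross3 ?b ?c) v = 0" by auto
    obtain p where p: "p \<noteq> (0,0,0)" "P = proj_pt p" using P(1) is_point_def by blast
    have "det3 ?b ?c p = 0" using P(2) p proj_pt_mem det3_dot' by metis
    then have "pcollinear B C P" using b c p pcollinear_proj by metis
    then show "P \<in> line_thru B C" using P by (simp add: line_thru_def)
  qed
  then show ?thesis unfolding is_line_def using nz by blast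
qed

lemma line_collinear_mem:
  assumes L: "is_line L" and P: "P \<in> L" and Q: "Q \<in> L" and PQ: "P \<noteq> Q"
    and R: "is_point R" and col: "pcollinear P Q R"
  shows "R \<in> L"
proof -
  obtain a where a: "a \<noteq> (0,0,0)" "L = {P. is_point P \<and> (\<forall>v\<in>P. dot3 a v = 0)}"
    using L is_line_def by blast
  have Pp: "is_point P" "is_point Q" using P Q a by auto
  let ?p = "rep P" and ?q = "rep Q" and ?r = "rep R"
  have rp: "?p \<noteq> (0,0,0)" "P = proj_pt ?p" "?q \<noteq> (0,0,0)" "Q = proj_pt ?q"
       "?r \<noteq> (0,0,0)" "R = proj_pt ?r" using rep Pp R by blast+
  have dp: "dot3 a ?p = 0" "dot3 a ?q = 0" using P Q a proj_pt_mem rp by blast+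
  have cz: "cross3 ?p ?q \<noteq> (0,0,0)" using cross_nonzero_if_distinct rp PQ by metis
  have "cross3 (cross3 ?p ?q) a = (0,0,0)"
    using dp by (simp add: cross_cross dot3_comm[of _ a] scale3_def vadd_def split: prod.split)
  then obtain k where k: "a = scale3 k (cross3 ?p ?q)" using cross_zero_dep cz by blast
  have "det3 ?p ?q ?r = 0" using col rp pcollinear_proj by metis
  then have "dot3 a ?r = 0" using k by (simp add: dot3_scale_l det3_dot')
  then have allR: "\<forall>v\<in>R. dot3 a v = 0"
  proof (intro ballI)
    fix v assume "v \<in> R"
    then obtain c where "v = scale3 c ?r" using rp(6) proj_pt_iff by metis
    then show "dot3 a v = 0" using \<open>dot3 a ?r = 0\<close> by (simp add: dot3_scale)
  qed
  show ?thesis using a(2) R allR by simp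
qed

lemma vadd_comb_eq:
  "vadd (scale3 a1 v) (scale3 b1 w) = vadd (scale3 a2 v) (scale3 b2 w) \<longleftrightarrow>
   vadd (scale3 (a1 - a2) v) (scale3 (b1 - b2) w) = (0,0,0)"
  by (cases v rule: prod_cases3; cases w rule: prod_cases3) (auto simp: scale3_def vadd_def algebra_simps)

lemma cross_comb:
  "cross3 (vadd (scale3 a v) (scale3 b w)) (vadd (scale3 c v) (scale3 d w)) = scale3 (a*d - b*c) (cross3 v w)"
  by (cases v rule: prod_cases3; cases w rule: prod_cases3) (simp add: scale3_def vadd_def cross3_def algebra_simps)

lemma cross_comb_l: "cross3 (vadd (scale3 a v) (scale3 b w)) w = scale3 a (cross3 v w)"
  by (cases v rule: prod_cases3; cases w rule: prod_cases3) (simp add: scale3_def vadd_def cross3_def algebra_simps)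
lemma cross_comb_r: "cross3 v (vadd (scale3 a v) (scale3 b w)) = scale3 b (cross3 v w)"
  by (cases v rule: prod_cases3; cases w rule: prod_cases3) (simp add: scale3_def vadd_def cross3_def algebra_simps)
lemma cross_zero_l [simp]: "cross3 (0,0,0) w = (0,0,0)" by (simp add: cross3_def split: prod.split)
lemma cross_zero_r [simp]: "cross3 w (0,0,0) = (0,0,0)" by (simp add: cross3_def split: prod.split)

lemma indep_zero:
  assumes "cross3 v w \<noteq> (0,0,0)" "vadd (scale3 a v) (scale3 b w) = (0,0,0)"
  shows "a = 0 \<and> b = 0"
proof -
  have "scale3 a (cross3 v w) = (0,0,0)" using assms(2) cross_comb_l[of a v b w] by simp
  then have "a = 0" using assms(1) by (simp add: scale3_eq0)
  have "scale3 b (cross3 v w) = (0,0,0)" using assms(2) cross_comb_r[of v a b w] by simp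
  then have "b = 0" using assms(1) by (simp add: scale3_eq0)
  with \<open>a = 0\<close> show ?thesis by simp
qed

lemma indep_eq:
  assumes "cross3 v w \<noteq> (0,0,0)" "vadd (scale3 a1 v) (scale3 b1 w) = vadd (scale3 a2 v) (scale3 b2 w)"
  shows "a1 = a2 \<and> b1 = b2"
proof -
  have "vadd (scale3 (a1 - a2) v) (scale3 (b1 - b2) w) = (0,0,0)" using assms(2) vadd_comb_eq by blast
  then have "a1 - a2 = 0 \<and> b1 - b2 = 0" by (rule indep_zero[OF assms(1)])
  then show ?thesis by simp
qed

lemma vadd_v: "vadd v (scale3 s w) = vadd (scale3 1 v) (scale3 s w)" by simp

lemma comb_nonzero: "cross3 v w \<noteq> (0,0,0) \<Longrightarrow> vadd v (scale3 s w) \<noteq> (0,0,0)"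
  using indep_zero[of v w 1 s] by auto

lemma scale_comb: "scale3 k (vadd (scale3 a v) (scale3 b w)) = vadd (scale3 (k*a) v) (scale3 (k*b) w)"
  by (cases v rule: prod_cases3; cases w rule: prod_cases3) (simp add: scale3_def vadd_def algebra_simps)

lemma add_combs: "vadd (vadd (scale3 a v) (scale3 b w)) (scale3 s (vadd (scale3 c v) (scale3 d w)))
   = vadd (scale3 (a + s*c) v) (scale3 (b + s*d) w)"
  by (cases v rule: prod_cases3; cases w rule: prod_cases3) (simp add: scale3_def vadd_def algebra_simps)

lemma solve2:
  fixes x y a b k1 k2 s1 s2 t1 t2 :: "'k::field"
  assumes e1: "x + t1 * y = k1 * (a + s1 * b)" and e2: "x + t2 * y = k2 * (a + s2 * b)" and ne: "t1 \<noteq> t2"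
  shows "y = ((k1-k2)/(t1-t2)) * a + ((k1*s1 - k2*s2)/(t1-t2)) * b"
    and "x = (k1 - t1 * ((k1-k2)/(t1-t2))) * a + (k1*s1 - t1*((k1*s1 - k2*s2)/(t1-t2))) * b"
proof -
  have d: "t1 - t2 \<noteq> 0" using ne by simp
  have "(x + t1 * y) - (x + t2 * y) = k1 * (a + s1 * b) - k2 * (a + s2 * b)" using e1 e2 by simp
  then have eq: "(t1 - t2) * y = (k1-k2) * a + (k1*s1 - k2*s2) * b"
    by (simp add: algebra_simps)
  have "y = ((t1 - t2) * y) / (t1 - t2)" using d by simp
  also have "\<dots> = ((k1-k2) * a + (k1*s1 - k2*s2) * b) / (t1 - t2)" using eq by simp
  also have "\<dots> = ((k1-k2)/(t1-t2)) * a + ((k1*s1 - k2*s2)/(t1-t2)) * b"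
    by (simp add: add_divide_distrib)
  finally show y: "y = ((k1-k2)/(t1-t2)) * a + ((k1*s1 - k2*s2)/(t1-t2)) * b" .
  have "x = k1 * (a + s1 * b) - t1 * y" using e1 by (simp add: algebra_simps)
  also have "\<dots> = (k1 - t1 * ((k1-k2)/(t1-t2))) * a + (k1*s1 - t1*((k1*s1 - k2*s2)/(t1-t2))) * b"
    by (subst y) (simp add: algebra_simps)
  finally show "x = (k1 - t1 * ((k1-k2)/(t1-t2))) * a + (k1*s1 - t1*((k1*s1 - k2*s2)/(t1-t2))) * b" .
qed

lemma quad3:
  fixes A B C z1 z2 z3 :: "'k::field"
  assumes "A*z1^2 + B*z1 + C = 0" "A*z2^2 + B*z2 + C = 0" "A*z3^2 + B*z3 + C = 0"
    and "z1 \<noteq> z2" "z1 \<noteq> z3" "z2 \<noteq> z3"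
  shows "A = 0 \<and> B = 0 \<and> C = 0"
proof -
  have "(z1 - z2) * (A*(z1+z2) + B) = (A*z1^2 + B*z1 + C) - (A*z2^2 + B*z2 + C)"
    by (simp add: algebra_simps power2_eq_square)
  then have e12: "(z1 - z2) * (A*(z1+z2) + B) = 0" using assms(1,2) by simp
  have "(z1 - z3) * (A*(z1+z3) + B) = (A*z1^2 + B*z1 + C) - (A*z3^2 + B*z3 + C)"
    by (simp add: algebra_simps power2_eq_square)
  then have e13: "(z1 - z3) * (A*(z1+z3) + B) = 0" using assms(1,3) by simp
  have f12: "A*(z1+z2) + B = 0" using e12 assms(4) by simp
  have f13: "A*(z1+z3) + B = 0" using e13 assms(5) by simp
  have "A * (z2 - z3) = (A*(z1+z2) + B) - (A*(z1+z3) + B)" by (simp add: algebra_simps)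
  then have "A * (z2 - z3) = 0" using f12 f13 by simp
  then have A: "A = 0" using assms(6) by simp
  then have "B = 0" using f12 by simp
  moreover have "C = 0" using assms(1) A \<open>B = 0\<close> by simp
  ultimately show ?thesis using A by simp
qed

lemma obtain3:
  assumes "finite I" "3 \<le> card I"
  obtains i1 i2 i3 where "i1 \<in> I" "i2 \<in> I" "i3 \<in> I" "i1 \<noteq> i2" "i1 \<noteq> i3" "i2 \<noteq> i3"
proof -
  have "I \<noteq> {}" using assms by auto
  then obtain i1 where i1: "i1 \<in> I" by blast
  have c2: "2 \<le> card (I - {i1})" using assms i1 by simp
  then have "I - {i1} \<noteq> {}" by (metis card.empty not_numeral_le_zero)
  then obtain i2 where i2: "i2 \<in> I - {i1}" by blast
  have "1 \<le> card (I - {i1} - {i2})" using c2 i2 assms(1) by simp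
  then have "I - {i1} - {i2} \<noteq> {}" by (metis card.empty not_one_le_zero)
  then obtain i3 where i3: "i3 \<in> I - {i1} - {i2}" by blast
  show ?thesis using that i1 i2 i3 by blast
qed

lemma pair_eq:
  fixes I :: "'g set" and \<pi> :: "'g \<Rightarrow> 'k::field ppoint" and f :: "'g \<Rightarrow> 'g"
    and s s' :: "'g \<Rightarrow> 'k"
  assumes fin: "finite I" and card: "3 \<le> card I" and inj: "inj_on \<pi> I" and fI: "\<forall>i\<in>I. f i \<in> I"
    and cvw: "cross3 v w \<noteq> (0,0,0)" and cvw': "cross3 v' w' \<noteq> (0,0,0)"
    and par: "\<forall>i\<in>I. s i \<noteq> 0 \<and> \<pi> i = proj_pt (vadd v (scale3 (s i) w))"
    and par': "\<forall>i\<in>I. s' i \<noteq> 0 \<and> \<pi> i = proj_pt (vadd v' (scale3 (s' i) w'))"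
    and sc: "\<forall>i\<in>I. s (f i) = lm * s i" and lam: "lm \<noteq> 1"
    and sc': "\<forall>i\<in>I. s' (f i) = lm' * s' i"
  shows "{proj_pt v, proj_pt w} = {proj_pt v', proj_pt w'}"
proof -
  have kap: "\<exists>k. k \<noteq> 0 \<and> vadd v' (scale3 (s' i) w') = scale3 k (vadd v (scale3 (s i) w))" if i: "i \<in> I" for i
  proof -
    have "proj_pt (vadd v (scale3 (s i) w)) = proj_pt (vadd v' (scale3 (s' i) w'))"
      using par par' i by metis
    then show ?thesis using proj_pt_eq_iff comb_nonzero[OF cvw] by blast
  qed
  have injs': "i = j" if "i \<in> I" "j \<in> I" "s' i = s' j" for i j
  proof -
    have "\<pi> i = \<pi> j" using par' that by metis
    then show ?thesis using inj that by (simp add: inj_on_def)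
  qed
  obtain i1 i2 i3 where i: "i1 \<in> I" "i2 \<in> I" "i3 \<in> I" "i1 \<noteq> i2" "i1 \<noteq> i3" "i2 \<noteq> i3"
    using obtain3[OF fin card] by blast
  obtain k1 where k1: "vadd v' (scale3 (s' i1) w') = scale3 k1 (vadd v (scale3 (s i1) w))" using kap i(1) by blast
  obtain k2 where k2: "vadd v' (scale3 (s' i2) w') = scale3 k2 (vadd v (scale3 (s i2) w))" using kap i(2) by blast
  have ne: "s' i1 \<noteq> s' i2" using injs' i by blast
  define t1 t2 where "t1 = s' i1" and "t2 = s' i2"
  define c where "c = (k1-k2)/(t1-t2)"
  define d where "d = (k1*s i1 - k2*s i2)/(t1-t2)"
  define a where "a = k1 - t1 * c"
  define b where "b = k1 * s i1 - t1 * d"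
  have vw': "w' = vadd (scale3 c v) (scale3 d w) \<and> v' = vadd (scale3 a v) (scale3 b w)"
  proof -
    obtain x1 x2 x3 where v': "v' = (x1,x2,x3)" by (cases v' rule: prod_cases3)
    obtain y1 y2 y3 where w': "w' = (y1,y2,y3)" by (cases w' rule: prod_cases3)
    obtain a1 a2 a3 where v: "v = (a1,a2,a3)" by (cases v rule: prod_cases3)
    obtain b1 b2 b3 where w: "w = (b1,b2,b3)" by (cases w rule: prod_cases3)
    have e1: "x1 + t1 * y1 = k1 * (a1 + s i1 * b1)" "x2 + t1 * y2 = k1 * (a2 + s i1 * b2)"
             "x3 + t1 * y3 = k1 * (a3 + s i1 * b3)"
      using k1 by (simp_all add: v' w' v w t1_def vadd_def scale3_def algebra_simps)
    have e2: "x1 + t2 * y1 = k2 * (a1 + s i2 * b1)" "x2 + t2 * y2 = k2 * (a2 + s i2 * b2)"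
             "x3 + t2 * y3 = k2 * (a3 + s i2 * b3)"
      using k2 by (simp_all add: v' w' v w t2_def vadd_def scale3_def algebra_simps)
    have ne': "t1 \<noteq> t2" using ne by (simp add: t1_def t2_def)
    note S1 = solve2[OF e1(1) e2(1) ne'] and S2 = solve2[OF e1(2) e2(2) ne'] and S3 = solve2[OF e1(3) e2(3) ne']
    show ?thesis
      using S1 S2 S3 by (simp add: v' w' v w vadd_def scale3_def c_def d_def a_def b_def)
  qed
  have E: "b + s' i * d = s i * (a + s' i * c)" if ii: "i \<in> I" for i
  proof -
    obtain k where k: "vadd v' (scale3 (s' i) w') = scale3 k (vadd v (scale3 (s i) w))" using kap ii by blast
    have "vadd v' (scale3 (s' i) w') = vadd (scale3 (a + s' i * c) v) (scale3 (b + s' i * d) w)"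
      using vw' add_combs by metis
    moreover have "scale3 k (vadd v (scale3 (s i) w)) = vadd (scale3 k v) (scale3 (k * s i) w)"
      using scale_comb[of k 1 v "s i" w] by simp
    ultimately have "a + s' i * c = k \<and> b + s' i * d = k * s i"
      using k indep_eq[OF cvw] by metis
    then show ?thesis by (simp add: algebra_simps)
  qed
  define A where "A = lm' * c * d - lm * lm' * c * d"
  define B where "B = (b * c + lm' * a * d) - lm * (lm' * b * c + a * d)"
  define C where "C = a * b - lm * a * b"
  have Q: "A * (s' i)^2 + B * s' i + C = 0" if ii: "i \<in> I" for i
  proof -
    let ?z = "s' i" and ?j = "f i"
    have j: "?j \<in> I" using fI ii by blast
    have Ei: "b + ?z * d = s i * (a + ?z * c)" using E ii by blast
    have Ej: "b + (lm' * ?z) * d = (lm * s i) * (a + (lm' * ?z) * c)"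
      using E[OF j] sc sc' ii by metis
    have "(b + lm' * ?z * d) * (a + ?z * c) = lm * (a + lm' * ?z * c) * (s i * (a + ?z * c))"
      using Ej by (simp add: algebra_simps)
    also have "\<dots> = lm * (a + lm' * ?z * c) * (b + ?z * d)" using Ei by simp
    finally have "(b + lm' * ?z * d) * (a + ?z * c) - lm * (a + lm' * ?z * c) * (b + ?z * d) = 0"
      by simp
    moreover have "(b + lm' * ?z * d) * (a + ?z * c) - lm * (a + lm' * ?z * c) * (b + ?z * d)
        = A * ?z^2 + B * ?z + C"
      by (simp add: A_def B_def C_def algebra_simps power2_eq_square)
    ultimately show ?thesis by simp
  qed
  have dist: "s' i1 \<noteq> s' i2" "s' i1 \<noteq> s' i3" "s' i2 \<noteq> s' i3" using injs' i by blast+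
  have ABC: "A = 0 \<and> B = 0 \<and> C = 0" using quad3[OF Q[OF i(1)] Q[OF i(2)] Q[OF i(3)] dist] .
  have l1: "1 - lm \<noteq> 0" using lam by simp
  have "a * b * (1 - lm) = 0" using ABC by (simp add: C_def algebra_simps)
  then have ab: "a * b = 0" using l1 by simp
  have lne: "lm' \<noteq> 0"
  proof
    assume "lm' = 0"
    then have "s' (f i1) = 0" using sc' i(1) by simp
    moreover have "f i1 \<in> I" using fI i(1) by blast
    ultimately show False using par' by blast
  qed
  have "lm' * (c * d) * (1 - lm) = 0" using ABC by (simp add: A_def algebra_simps)
  then have cd: "c * d = 0" using l1 lne by simp
  have cr: "cross3 v' w' = scale3 (a*d - b*c) (cross3 v w)"
    using vw' cross_comb by metis
  have v'nz: "v' \<noteq> (0,0,0)" using cvw' by auto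
  have w'nz: "w' \<noteq> (0,0,0)" using cvw' by auto
  show ?thesis
  proof (cases "a = 0")
    case a0: True
    show ?thesis
    proof (cases "c = 0")
      case True
      then have "cross3 v' w' = (0,0,0)" using cr a0 by (simp add: scale3_eq0)
      then show ?thesis using cvw' by simp
    next
      case False
      then have d0: "d = 0" using cd by simp
      have "v' = scale3 b w" using vw' a0 by (simp add: vadd_def scale3_def split: prod.split)
      moreover have "w' = scale3 c v" using vw' d0 by (simp add: vadd_def scale3_def split: prod.split)
      moreover have "b \<noteq> 0" using v'nz \<open>v' = scale3 b w\<close> by (auto simp: scale3_eq0)
      ultimately have "proj_pt v' = proj_pt w" "proj_pt w' = proj_pt v"
        using False proj_pt_eq_scale by simp_all
      then show ?thesis by auto
    qed
  next
    case a0: False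
    then have b0: "b = 0" using ab by simp
    show ?thesis
    proof (cases "d = 0")
      case True
      then have "cross3 v' w' = (0,0,0)" using cr b0 by (simp add: scale3_eq0)
      then show ?thesis using cvw' by simp
    next
      case False
      then have c0: "c = 0" using cd by simp
      have "v' = scale3 a v" using vw' b0 by (simp add: vadd_def scale3_def split: prod.split)
      moreover have "w' = scale3 d w" using vw' c0 by (simp add: vadd_def scale3_def split: prod.split)
      ultimately have "proj_pt v' = proj_pt v" "proj_pt w' = proj_pt w"
        using a0 False proj_pt_eq_scale by simp_all
      then show ?thesis by auto
    qed
  qed
qed

locale pnet = group G for G :: "('g, 'z) monoid_scheme" (structure) +
  fixes H :: "'g set" and L1 L2 L3 :: "'k::field ppoint set" and \<alpha> \<beta> \<gamma> :: "'g \<Rightarrow> 'k ppoint"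
  assumes fin: "finite (carrier G)" and nrm: "H \<lhd> G" and ord: "card H \<ge> 3"
    and net: "dual_3net (order G) L1 L2 L3"
    and real: "realizes G L1 L2 L3 \<alpha> \<beta> \<gamma>"
    and sub: "\<forall>g1\<in>carrier G. \<forall>g2\<in>carrier G.
               triangular (\<alpha> ` (g1 <# H)) (\<beta> ` (g2 <# H)) (\<gamma> ` ((g1 \<otimes> g2) <# H))"
begin

lemma H_subgroup: "subgroup H G" by (rule normal_imp_subgroup[OF nrm])
lemma H_sub: "H \<subseteq> carrier G" by (rule subgroup.subset[OF H_subgroup])
lemma H_one: "\<one> \<in> H" by (rule subgroup.one_closed[OF H_subgroup])
lemma H_mult: "h \<in> H \<Longrightarrow> k \<in> H \<Longrightarrow> h \<otimes> k \<in> H" by (rule subgroup.m_closed[OF H_subgroup])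
lemma H_inv: "h \<in> H \<Longrightarrow> inv h \<in> H" by (rule subgroup.m_inv_closed[OF H_subgroup])
lemma H_carr: "h \<in> H \<Longrightarrow> h \<in> carrier G" using H_sub by (rule subsetD)

lemma conj_in: "x \<in> carrier G \<Longrightarrow> h \<in> H \<Longrightarrow> inv x \<otimes> h \<otimes> x \<in> H"
proof -
  assume x: "x \<in> carrier G" and h: "h \<in> H"
  have "inv x \<otimes> h \<otimes> inv (inv x) \<in> H" using nrm normal_inv_iff x h by blast
  then show ?thesis using x by simp
qed

lemma lcos_iff: "c \<in> x <# H \<longleftrightarrow> (\<exists>h\<in>H. c = x \<otimes> h)"
  by (auto simp: l_coset_def)

lemma lcos_carr: "x \<in> carrier G \<Longrightarrow> c \<in> x <# H \<Longrightarrow> c \<in> carrier G"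
  using lcos_iff H_carr by auto

lemma lcos_self: "x \<in> carrier G \<Longrightarrow> x \<in> x <# H"
  using lcos_iff H_one by (metis r_one)

lemma mult_inv_cancel: "y \<in> carrier G \<Longrightarrow> z \<in> carrier G \<Longrightarrow> y \<otimes> (inv y \<otimes> z) = z"
  by (simp add: m_assoc[symmetric])

lemma lcos_r: "x \<in> carrier G \<Longrightarrow> a \<in> x <# H \<Longrightarrow> h \<in> H \<Longrightarrow> a \<otimes> h \<in> x <# H"
proof -
  assume x: "x \<in> carrier G" and a: "a \<in> x <# H" and h: "h \<in> H"
  obtain k where k: "k \<in> H" "a = x \<otimes> k" using a lcos_iff by blast
  have "a \<otimes> h = x \<otimes> (k \<otimes> h)" using k x h H_carr by (simp add: m_assoc)
  then show ?thesis using lcos_iff H_mult k h by blast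
qed

lemma lcos_l: "y \<in> carrier G \<Longrightarrow> b \<in> y <# H \<Longrightarrow> h \<in> H \<Longrightarrow> h \<otimes> b \<in> y <# H"
proof -
  assume y: "y \<in> carrier G" and b: "b \<in> y <# H" and h: "h \<in> H"
  obtain k where k: "k \<in> H" "b = y \<otimes> k" using b lcos_iff by blast
  have hc: "h \<in> carrier G" "k \<in> carrier G" using h k H_carr by auto
  have "h \<otimes> b = y \<otimes> ((inv y \<otimes> h \<otimes> y) \<otimes> k)"
    using y hc k by (simp add: m_assoc[symmetric])
  then show ?thesis using lcos_iff H_mult conj_in y h k by blast
qed

lemma lcos_mult: "x \<in> carrier G \<Longrightarrow> y \<in> carrier G \<Longrightarrow> a \<in> x <# H \<Longrightarrow> b \<in> y <# H \<Longrightarrow> a \<otimes> b \<in> (x \<otimes> y) <# H"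
proof -
  assume x: "x \<in> carrier G" and y: "y \<in> carrier G" and a: "a \<in> x <# H" and b: "b \<in> y <# H"
  obtain h where h: "h \<in> H" "a = x \<otimes> h" using a lcos_iff by blast
  obtain k where k: "k \<in> H" "b = y \<otimes> k" using b lcos_iff by blast
  have hc: "h \<in> carrier G" "k \<in> carrier G" using h k H_carr by auto
  have "a \<otimes> b = x \<otimes> (h \<otimes> (y \<otimes> k))" using h k x y hc by (simp add: m_assoc)
  also have "h \<otimes> (y \<otimes> k) = y \<otimes> (inv y \<otimes> (h \<otimes> (y \<otimes> k)))" using y hc by (simp add: mult_inv_cancel)
  also have "x \<otimes> (y \<otimes> (inv y \<otimes> (h \<otimes> (y \<otimes> k)))) = (x \<otimes> y) \<otimes> ((inv y \<otimes> h \<otimes> y) \<otimes> k)"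
    using x y hc by (simp add: m_assoc)
  finally have "a \<otimes> b = (x \<otimes> y) \<otimes> ((inv y \<otimes> h \<otimes> y) \<otimes> k)" .
  then show ?thesis using lcos_iff H_mult conj_in y h k by blast
qed

lemma lcos_linv: "x \<in> carrier G \<Longrightarrow> y \<in> carrier G \<Longrightarrow> c \<in> (x \<otimes> y) <# H \<Longrightarrow> inv x \<otimes> c \<in> y <# H"
proof -
  assume x: "x \<in> carrier G" and y: "y \<in> carrier G" and c: "c \<in> (x \<otimes> y) <# H"
  obtain h where h: "h \<in> H" "c = x \<otimes> y \<otimes> h" using c lcos_iff by blast
  have "inv x \<otimes> c = y \<otimes> h" using x y h H_carr by (simp add: m_assoc[symmetric])
  then show ?thesis using lcos_iff h by blast
qed

lemma card_lcos: "x \<in> carrier G \<Longrightarrow> card (x <# H) = card H"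
proof -
  assume x: "x \<in> carrier G"
  have "x <# H = image (\<lambda>h. x \<otimes> h) H" by (auto simp: l_coset_def)
  moreover have "inj_on (\<lambda>h. x \<otimes> h) H" using x H_carr by (auto simp: inj_on_def)
  ultimately show ?thesis by (simp add: card_image)
qed

lemma fin_H: "finite H" using fin H_sub finite_subset by blast

lemma fin_lcos: "x \<in> carrier G \<Longrightarrow> finite (x <# H)"
  using fin lcos_carr finite_subset by (metis subsetI)

lemma bij: "bij_betw \<alpha> (carrier G) L1" "bij_betw \<beta> (carrier G) L2" "bij_betw \<gamma> (carrier G) L3"
  using real by (auto simp: realizes_def)

lemma coll: "a \<in> carrier G \<Longrightarrow> b \<in> carrier G \<Longrightarrow> c \<in> carrier G \<Longrightarrow>
   a \<otimes> b = c \<longleftrightarrow> pcollinear (\<alpha> a) (\<beta> b) (\<gamma> c)"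
  using real by (auto simp: realizes_def)

lemma in_L: "a \<in> carrier G \<Longrightarrow> \<alpha> a \<in> L1" "a \<in> carrier G \<Longrightarrow> \<beta> a \<in> L2" "a \<in> carrier G \<Longrightarrow> \<gamma> a \<in> L3"
  using bij by (auto simp: bij_betw_def)

lemma inj: "inj_on \<alpha> (carrier G)" "inj_on \<beta> (carrier G)" "inj_on \<gamma> (carrier G)"
  using bij by (auto simp: bij_betw_def)

lemma net_facts:
  "finite L1" "finite L2" "finite L3" "\<forall>P\<in>L1. is_point P" "\<forall>P\<in>L2. is_point P" "\<forall>P\<in>L3. is_point P"
  "L1 \<inter> L2 = {}" "L1 \<inter> L3 = {}" "L2 \<inter> L3 = {}"
proof -
  have A: "\<forall>i<3. Ball ([L1, L2, L3] ! i) is_point \<and> finite ([L1, L2, L3] ! i) \<and> card ([L1, L2, L3] ! i) = order G"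
    and B: "\<forall>i<3. \<forall>j<3. i \<noteq> j \<longrightarrow> [L1, L2, L3] ! i \<inter> [L1, L2, L3] ! j = {}"
    using net unfolding dual_3net_def by blast+
  have A0: "Ball L1 is_point \<and> finite L1" using A[rule_format, of 0] by simp
  have A1: "Ball L2 is_point \<and> finite L2" using A[rule_format, of 1] by simp
  have A2: "Ball L3 is_point \<and> finite L3" using A[rule_format, of 2] by simp
  show "finite L1" "finite L2" "finite L3" "\<forall>P\<in>L1. is_point P" "\<forall>P\<in>L2. is_point P" "\<forall>P\<in>L3. is_point P"
    using A0 A1 A2 by auto
  show "L1 \<inter> L2 = {}" using B[rule_format, of 0 1] by simp
  show "L1 \<inter> L3 = {}" using B[rule_format, of 0 2] by simp
  show "L2 \<inter> L3 = {}" using B[rule_format, of 1 2] by simp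
qed

lemma line_cond:
  assumes "is_line L" "i < 3" "j < 3" "i \<noteq> j" "L \<inter> [L1, L2, L3] ! i \<noteq> {}" "L \<inter> [L1, L2, L3] ! j \<noteq> {}" "k < 3"
  shows "card (L \<inter> [L1, L2, L3] ! k) = 1"
proof -
  have "\<forall>L. is_line L \<longrightarrow>
        (\<exists>i<3. \<exists>j<3. i \<noteq> j \<and> L \<inter> [L1, L2, L3] ! i \<noteq> {} \<and> L \<inter> [L1, L2, L3] ! j \<noteq> {}) \<longrightarrow>
        (\<forall>k<3. card (L \<inter> [L1, L2, L3] ! k) = 1)"
    using net unfolding dual_3net_def by (elim conjE)
  then have "is_line L \<longrightarrow>
        (\<exists>i<3. \<exists>j<3. i \<noteq> j \<and> L \<inter> [L1, L2, L3] ! i \<noteq> {} \<and> L \<inter> [L1, L2, L3] ! j \<noteq> {}) \<longrightarrow>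
        (\<forall>k<3. card (L \<inter> [L1, L2, L3] ! k) = 1)" by (rule spec)
  moreover have "\<exists>i<3. \<exists>j<3. i \<noteq> j \<and> L \<inter> [L1, L2, L3] ! i \<noteq> {} \<and> L \<inter> [L1, L2, L3] ! j \<noteq> {}"
    using assms(2-6) by blast
  ultimately show ?thesis using assms(1,7) by blast
qed

lemma no_two:
  assumes L: "is_line L" and ij: "i < 3" "j < 3" "i \<noteq> j"
    and X: "X \<in> L" "X \<in> [L1, L2, L3] ! i" and S: "S \<subseteq> L" "S \<subseteq> [L1, L2, L3] ! j" "2 \<le> card S"
  shows False
proof -
  have "S \<noteq> {}" using S(3) by (metis card.empty not_numeral_le_zero)
  then have "L \<inter> [L1, L2, L3] ! j \<noteq> {}" using S by blast
  moreover have "L \<inter> [L1, L2, L3] ! i \<noteq> {}" using X by blast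
  ultimately have c: "card (L \<inter> [L1, L2, L3] ! j) = 1" using line_cond[OF L ij(1,2,3)] ij(2) by blast
  have "j = 0 \<or> j = 1 \<or> j = 2" using ij by arith
  then have fj: "finite ([L1, L2, L3] ! j)" using net_facts(1-3) by auto
  have "card S \<le> card (L \<inter> [L1, L2, L3] ! j)" using S fj by (intro card_mono) auto
  then show False using c S(3) by simp
qed

end

lemma vadd_zero_l: "vadd (scale3 0 w) x = x"
  by (cases w rule: prod_cases3; cases x rule: prod_cases3) (simp add: vadd_def scale3_def)

lemma param_aux:
  fixes a b v :: "'k::field vec3"
  assumes "v = scale3 (1/D) (vadd (scale3 c1 a) (scale3 c2 b))" "D \<noteq> 0"
  shows "c1 = 0 \<Longrightarrow> v = scale3 (c2/D) b"
    and "c2 = 0 \<Longrightarrow> v = scale3 (c1/D) a"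
    and "c1 \<noteq> 0 \<Longrightarrow> v = scale3 (c1/D) (vadd a (scale3 (c2/c1) b))"
  using assms
  by (cases a rule: prod_cases3; cases b rule: prod_cases3; simp add: vadd_def scale3_def field_simps)+

lemma param:
  fixes w a b v :: "'k::field vec3"
  assumes D: "det3 w a b \<noteq> 0" and col: "det3 a b v = 0" and v0: "v \<noteq> (0,0,0)"
    and na: "proj_pt v \<noteq> proj_pt a" and nb: "proj_pt v \<noteq> proj_pt b"
  shows "\<exists>s. s \<noteq> 0 \<and> proj_pt v = proj_pt (vadd a (scale3 s b))"
proof -
  let ?D = "det3 w a b" and ?c1 = "det3 w v b" and ?c2 = "det3 w a v"
  have z: "det3 v a b = 0" using col det3_cyc[of v a b] by simp
  have cr: "scale3 ?D v = vadd (scale3 ?c1 a) (scale3 ?c2 b)"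
    using cramer3[of w a b v] z by (simp add: vadd_zero_l)
  have "scale3 (1/?D) (scale3 ?D v) = v" using D by simp
  then have inv: "v = scale3 (1/?D) (vadd (scale3 ?c1 a) (scale3 ?c2 b))" using cr by simp
  have c1: "?c1 \<noteq> 0"
  proof
    assume "?c1 = 0"
    then have "v = scale3 (?c2/?D) b" using param_aux(1)[OF inv D] by blast
    moreover then have "?c2/?D \<noteq> 0" using v0 by (auto simp: scale3_eq0)
    ultimately show False using nb proj_pt_eq_scale by metis
  qed
  have c2: "?c2 \<noteq> 0"
  proof
    assume "?c2 = 0"
    then have "v = scale3 (?c1/?D) a" using param_aux(2)[OF inv D] by blast
    moreover then have "?c1/?D \<noteq> 0" using v0 by (auto simp: scale3_eq0)
    ultimately show False using na proj_pt_eq_scale by metis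
  qed
  have "v = scale3 (?c1/?D) (vadd a (scale3 (?c2/?c1) b))" using param_aux(3)[OF inv D c1] .
  moreover have "?c1/?D \<noteq> 0" using c1 D by simp
  ultimately have "proj_pt v = proj_pt (vadd a (scale3 (?c2/?c1) b))" using proj_pt_eq_scale by metis
  moreover have "?c2/?c1 \<noteq> 0" using c1 c2 by simp
  ultimately show ?thesis by blast
qed

lemma one_plus_eq: "1 + x * (u::'k::field) = 0 \<Longrightarrow> 1 + y * u = 0 \<Longrightarrow> x = y"
proof -
  assume a: "1 + x * u = 0" "1 + y * u = 0"
  then have "u \<noteq> 0" by auto
  moreover have "1 + x * u = 1 + y * u" using a by simp
  then have "x * u = y * u" by (rule add_left_cancel[THEN iffD1])
  ultimately show ?thesis by simp
qed

context pnet begin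

definition ctri :: "'g \<Rightarrow> 'g \<Rightarrow> 'k vec3 \<Rightarrow> 'k vec3 \<Rightarrow> 'k vec3 \<Rightarrow> ('g \<Rightarrow> 'k) \<Rightarrow> ('g \<Rightarrow> 'k) \<Rightarrow> ('g \<Rightarrow> 'k) \<Rightarrow> bool"
  where "ctri x y p q r s t u \<longleftrightarrow> det3 p q r \<noteq> 0 \<and>
   (\<forall>a\<in>x <# H. s a \<noteq> 0 \<and> \<alpha> a = proj_pt (vadd q (scale3 (s a) r))) \<and>
   (\<forall>b\<in>y <# H. t b \<noteq> 0 \<and> \<beta> b = proj_pt (vadd r (scale3 (t b) p))) \<and>
   (\<forall>c\<in>(x \<otimes> y) <# H. u c \<noteq> 0 \<and> \<gamma> c = proj_pt (vadd p (scale3 (u c) q)))"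

lemma card_img: "x \<in> carrier G \<Longrightarrow> card (\<alpha> ` (x <# H)) = card H \<and> card (\<beta> ` (x <# H)) = card H \<and> card (\<gamma> ` (x <# H)) = card H"
proof -
  assume x: "x \<in> carrier G"
  have sub: "x <# H \<subseteq> carrier G" using lcos_carr x by blast
  have "inj_on \<alpha> (x <# H)" "inj_on \<beta> (x <# H)" "inj_on \<gamma> (x <# H)"
    using inj_on_subset[OF inj(1) sub] inj_on_subset[OF inj(2) sub] inj_on_subset[OF inj(3) sub] by auto
  then show ?thesis using card_lcos x by (simp add: card_image)
qed

lemma ctri_exists:
  assumes x: "x \<in> carrier G" and y: "y \<in> carrier G"
  shows "\<exists>p q r s t u. ctri x y p q r s t u"
proof -
  have xy: "x \<otimes> y \<in> carrier G" using x y by simp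
  have T: "triangular (\<alpha> ` (x <# H)) (\<beta> ` (y <# H)) (\<gamma> ` ((x \<otimes> y) <# H))"
    using sub x y by simp
  then obtain P Q R where PQR: "is_point P \<and> is_point Q \<and> is_point R \<and> \<not> pcollinear P Q R \<and>
       \<alpha> ` (x <# H) \<subseteq> line_thru Q R \<and> \<beta> ` (y <# H) \<subseteq> line_thru P R \<and>
       \<gamma> ` ((x \<otimes> y) <# H) \<subseteq> line_thru P Q"
    unfolding triangular_def by (elim exE) (rule that)
  then have pts: "is_point P" "is_point Q" "is_point R" and nc: "\<not> pcollinear P Q R"
    and A1: "\<alpha> ` (x <# H) \<subseteq> line_thru Q R" and A2: "\<beta> ` (y <# H) \<subseteq> line_thru P R"
    and A3: "\<gamma> ` ((x \<otimes> y) <# H) \<subseteq> line_thru P Q" by simp_all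
  define p q r where "p = rep P" and "q = rep Q" and "r = rep R"
  have reps: "p \<noteq> (0,0,0)" "P = proj_pt p" "q \<noteq> (0,0,0)" "Q = proj_pt q" "r \<noteq> (0,0,0)" "R = proj_pt r"
    using rep[OF pts(1)] rep[OF pts(2)] rep[OF pts(3)] p_def q_def r_def by auto
  have D: "det3 p q r \<noteq> 0" using nc pcollinear_points[OF pts] p_def q_def r_def by simp
  have PQ: "P \<noteq> Q"
  proof
    assume "P = Q" then have "p = q" using p_def q_def by simp
    then show False using D det3_rep12[of q r] by simp
  qed
  have PR: "P \<noteq> R"
  proof
    assume "P = R" then have "p = r" using p_def r_def by simp
    then show False using D det3_rep13[of r q] by simp
  qed
  have QR: "Q \<noteq> R"
  proof
    assume "Q = R" then have "q = r" using q_def r_def by simp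
    then show False using D det3_rep23[of p r] by simp
  qed
  have lPQ: "is_line (line_thru P Q)" using is_line_line_thru[OF pts(1,2) PQ] .
  have lPR: "is_line (line_thru P R)" using is_line_line_thru[OF pts(1,3) PR] .
  have lQR: "is_line (line_thru Q R)" using is_line_line_thru[OF pts(2,3) QR] .
  have cA: "2 \<le> card (\<alpha> ` (x <# H))" and cB: "2 \<le> card (\<beta> ` (y <# H))"
    and cC: "2 \<le> card (\<gamma> ` ((x \<otimes> y) <# H))"
    using card_img[OF x] card_img[OF y] card_img[OF xy] ord by auto
  have SA: "\<alpha> ` (x <# H) \<subseteq> L1" using in_L(1) lcos_carr[OF x] by blast
  have SB: "\<beta> ` (y <# H) \<subseteq> L2" using in_L(2) lcos_carr[OF y] by blast
  have SC: "\<gamma> ` ((x \<otimes> y) <# H) \<subseteq> L3" using in_L(3) lcos_carr[OF xy] by blast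
  have memP: "P \<in> line_thru P Q" "P \<in> line_thru P R"
    using line_thru_mem1[OF pts(1,2)] line_thru_mem1[OF pts(1,3)] by simp_all
  have memQ: "Q \<in> line_thru P Q" "Q \<in> line_thru Q R"
    using line_thru_mem2[OF pts(1,2)] line_thru_mem1[OF pts(2,3)] by simp_all
  have memR: "R \<in> line_thru P R" "R \<in> line_thru Q R"
    using line_thru_mem2[OF pts(1,3)] line_thru_mem2[OF pts(2,3)] by simp_all
  have ex_s: "\<forall>a\<in>x <# H. \<exists>s. s \<noteq> 0 \<and> \<alpha> a = proj_pt (vadd q (scale3 s r))"
  proof
    fix a assume a: "a \<in> x <# H"
    have aL: "\<alpha> a \<in> L1" using SA a by blast
    have nR: "\<alpha> a \<noteq> R"
    proof
      assume "\<alpha> a = R"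
      then show False using no_two[OF lPR, of 0 1 "\<alpha> a" "\<beta> ` (y <# H)"] memR aL A2 SB cB by simp
    qed
    have nQ: "\<alpha> a \<noteq> Q"
    proof
      assume "\<alpha> a = Q"
      then show False using no_two[OF lPQ, of 0 2 "\<alpha> a" "\<gamma> ` ((x \<otimes> y) <# H)"] memQ aL A3 SC cC by simp
    qed
    have onl: "\<alpha> a \<in> line_thru Q R" using A1 a by blast
    then have ip: "is_point (\<alpha> a)" and pc: "pcollinear Q R (\<alpha> a)" by (auto simp: line_thru_def)
    define v where "v = rep (\<alpha> a)"
    have v: "v \<noteq> (0,0,0)" "\<alpha> a = proj_pt v" using rep[OF ip] v_def by auto
    have "det3 q r v = 0" using pc pcollinear_proj[of q r v] reps v by simp
    then show "\<exists>s. s \<noteq> 0 \<and> \<alpha> a = proj_pt (vadd q (scale3 s r))"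
      using param[OF D _ v(1)] v nR nQ reps by simp
  qed
  have ex_t: "\<forall>b\<in>y <# H. \<exists>t. t \<noteq> 0 \<and> \<beta> b = proj_pt (vadd r (scale3 t p))"
  proof
    fix b assume b: "b \<in> y <# H"
    have bL: "\<beta> b \<in> L2" using SB b by blast
    have nP: "\<beta> b \<noteq> P"
    proof
      assume "\<beta> b = P"
      then show False using no_two[OF lPQ, of 1 2 "\<beta> b" "\<gamma> ` ((x \<otimes> y) <# H)"] memP bL A3 SC cC by simp
    qed
    have nR: "\<beta> b \<noteq> R"
    proof
      assume "\<beta> b = R"
      then show False using no_two[OF lQR, of 1 0 "\<beta> b" "\<alpha> ` (x <# H)"] memR bL A1 SA cA by simp
    qed
    have onl: "\<beta> b \<in> line_thru R P" using A2 b line_thru_sym by blast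
    then have ip: "is_point (\<beta> b)" and pc: "pcollinear R P (\<beta> b)" by (auto simp: line_thru_def)
    define v where "v = rep (\<beta> b)"
    have v: "v \<noteq> (0,0,0)" "\<beta> b = proj_pt v" using rep[OF ip] v_def by auto
    have "det3 r p v = 0" using pc pcollinear_proj[of r p v] reps v by simp
    moreover have "det3 q r p \<noteq> 0" using D det3_cyc[of p q r] det3_cyc[of q r p] by simp
    ultimately show "\<exists>t. t \<noteq> 0 \<and> \<beta> b = proj_pt (vadd r (scale3 t p))"
      using param[of q r p v] v nR nP reps by simp
  qed
  have ex_u: "\<forall>c\<in>(x \<otimes> y) <# H. \<exists>u. u \<noteq> 0 \<and> \<gamma> c = proj_pt (vadd p (scale3 u q))"
  proof
    fix c assume c: "c \<in> (x \<otimes> y) <# H"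
    have cL: "\<gamma> c \<in> L3" using SC c by blast
    have nP: "\<gamma> c \<noteq> P"
    proof
      assume "\<gamma> c = P"
      then show False using no_two[OF lPR, of 2 1 "\<gamma> c" "\<beta> ` (y <# H)"] memP cL A2 SB cB by simp
    qed
    have nQ: "\<gamma> c \<noteq> Q"
    proof
      assume "\<gamma> c = Q"
      then show False using no_two[OF lQR, of 2 0 "\<gamma> c" "\<alpha> ` (x <# H)"] memQ cL A1 SA cA by simp
    qed
    have onl: "\<gamma> c \<in> line_thru P Q" using A3 c by blast
    then have ip: "is_point (\<gamma> c)" and pc: "pcollinear P Q (\<gamma> c)" by (auto simp: line_thru_def)
    define v where "v = rep (\<gamma> c)"
    have v: "v \<noteq> (0,0,0)" "\<gamma> c = proj_pt v" using rep[OF ip] v_def by auto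
    have "det3 p q v = 0" using pc pcollinear_proj[of p q v] reps v by simp
    moreover have "det3 r p q \<noteq> 0" using D det3_cyc[of p q r] det3_cyc[of q r p] by simp
    ultimately show "\<exists>u. u \<noteq> 0 \<and> \<gamma> c = proj_pt (vadd p (scale3 u q))"
      using param[of r p q v] v nP nQ reps by simp
  qed
  obtain s where s: "\<forall>a\<in>x <# H. s a \<noteq> 0 \<and> \<alpha> a = proj_pt (vadd q (scale3 (s a) r))"
    using bchoice[OF ex_s] by blast
  obtain t where t: "\<forall>b\<in>y <# H. t b \<noteq> 0 \<and> \<beta> b = proj_pt (vadd r (scale3 (t b) p))"
    using bchoice[OF ex_t] by blast
  obtain u where u: "\<forall>c\<in>(x \<otimes> y) <# H. u c \<noteq> 0 \<and> \<gamma> c = proj_pt (vadd p (scale3 (u c) q))"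
    using bchoice[OF ex_u] by blast
  have "ctri x y p q r s t u" unfolding ctri_def using D s t u by blast
  then show ?thesis by blast
qed

end

context pnet begin

lemma ctri_D: "ctri x y p q r s t u \<Longrightarrow> det3 p q r \<noteq> 0" by (simp add: ctri_def)
lemma ctri_A: "ctri x y p q r s t u \<Longrightarrow> a \<in> x <# H \<Longrightarrow> s a \<noteq> 0 \<and> \<alpha> a = proj_pt (vadd q (scale3 (s a) r))"
  by (simp add: ctri_def)
lemma ctri_B: "ctri x y p q r s t u \<Longrightarrow> b \<in> y <# H \<Longrightarrow> t b \<noteq> 0 \<and> \<beta> b = proj_pt (vadd r (scale3 (t b) p))"
  by (simp add: ctri_def)
lemma ctri_C: "ctri x y p q r s t u \<Longrightarrow> c \<in> (x \<otimes> y) <# H \<Longrightarrow> u c \<noteq> 0 \<and> \<gamma> c = proj_pt (vadd p (scale3 (u c) q))"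
  by (simp add: ctri_def)

lemma inv_mult_cancel2: "y \<in> carrier G \<Longrightarrow> z \<in> carrier G \<Longrightarrow> inv y \<otimes> (y \<otimes> z) = z"
  by (simp add: m_assoc[symmetric])

lemma ctri_eq:
  assumes T: "ctri x y p q r s t u" and x: "x \<in> carrier G" and y: "y \<in> carrier G"
    and a: "a \<in> x <# H" and b: "b \<in> y <# H"
  shows "1 + s a * t b * u (a \<otimes> b) = 0"
proof -
  have c: "a \<otimes> b \<in> (x \<otimes> y) <# H" using lcos_mult[OF x y a b] .
  have ac: "a \<in> carrier G" using lcos_carr[OF x a] .
  have bc: "b \<in> carrier G" using lcos_carr[OF y b] .
  have abc: "a \<otimes> b \<in> carrier G" using ac bc by simp
  have "pcollinear (\<alpha> a) (\<beta> b) (\<gamma> (a \<otimes> b))" using coll[OF ac bc abc] by simp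
  then have "det3 (vadd q (scale3 (s a) r)) (vadd r (scale3 (t b) p)) (vadd p (scale3 (u (a \<otimes> b)) q)) = 0"
    using ctri_A[OF T a] ctri_B[OF T b] ctri_C[OF T c] by (simp add: pcollinear_proj)
  then have "(1 + s a * t b * u (a \<otimes> b)) * det3 p q r = 0" by (simp add: det3_tri)
  then show ?thesis using ctri_D[OF T] by simp
qed

lemma ctri_injA: "ctri x y p q r s t u \<Longrightarrow> x \<in> carrier G \<Longrightarrow> a \<in> x <# H \<Longrightarrow> a' \<in> x <# H \<Longrightarrow> s a = s a' \<Longrightarrow> a = a'"
proof -
  assume T: "ctri x y p q r s t u" and x: "x \<in> carrier G" and a: "a \<in> x <# H" "a' \<in> x <# H" and e: "s a = s a'"
  have "\<alpha> a = \<alpha> a'" using ctri_A[OF T a(1)] ctri_A[OF T a(2)] e by simp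
  then show "a = a'" using inj(1) lcos_carr[OF x a(1)] lcos_carr[OF x a(2)] by (simp add: inj_on_def)
qed

lemma ctri_injB: "ctri x y p q r s t u \<Longrightarrow> y \<in> carrier G \<Longrightarrow> b \<in> y <# H \<Longrightarrow> b' \<in> y <# H \<Longrightarrow> t b = t b' \<Longrightarrow> b = b'"
proof -
  assume T: "ctri x y p q r s t u" and y: "y \<in> carrier G" and b: "b \<in> y <# H" "b' \<in> y <# H" and e: "t b = t b'"
  have "\<beta> b = \<beta> b'" using ctri_B[OF T b(1)] ctri_B[OF T b(2)] e by simp
  then show "b = b'" using inj(2) lcos_carr[OF y b(1)] lcos_carr[OF y b(2)] by (simp add: inj_on_def)
qed

lemma ctri_injC: "ctri x y p q r s t u \<Longrightarrow> x \<otimes> y \<in> carrier G \<Longrightarrow> c \<in> (x \<otimes> y) <# H \<Longrightarrow> c' \<in> (x \<otimes> y) <# H \<Longrightarrow> u c = u c' \<Longrightarrow> c = c'"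
proof -
  assume T: "ctri x y p q r s t u" and xy: "x \<otimes> y \<in> carrier G" and c: "c \<in> (x \<otimes> y) <# H" "c' \<in> (x \<otimes> y) <# H" and e: "u c = u c'"
  have "\<gamma> c = \<gamma> c'" using ctri_C[OF T c(1)] ctri_C[OF T c(2)] e by simp
  then show "c = c'" using inj(3) lcos_carr[OF xy c(1)] lcos_carr[OF xy c(2)] by (simp add: inj_on_def)
qed

lemma scaleA:
  assumes T: "ctri x y p q r s t u" and x: "x \<in> carrier G" and y: "y \<in> carrier G" and h: "h \<in> H"
    and a: "a \<in> x <# H"
  shows "s (a \<otimes> h) = (t y / t (inv h \<otimes> y)) * s a"
proof -
  have hc: "h \<in> carrier G" using H_carr h .
  have ac: "a \<in> carrier G" using lcos_carr[OF x a] .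
  have ah: "a \<otimes> h \<in> x <# H" using lcos_r[OF x a h] .
  have yy: "y \<in> y <# H" using lcos_self[OF y] .
  have hy: "inv h \<otimes> y \<in> y <# H" using lcos_l[OF y yy H_inv[OF h]] .
  have e1: "1 + s a * t y * u (a \<otimes> y) = 0" using ctri_eq[OF T x y a yy] .
  have e2: "1 + s (a \<otimes> h) * t (inv h \<otimes> y) * u ((a \<otimes> h) \<otimes> (inv h \<otimes> y)) = 0" using ctri_eq[OF T x y ah hy] .
  have "(a \<otimes> h) \<otimes> (inv h \<otimes> y) = a \<otimes> (h \<otimes> (inv h \<otimes> y))" using ac hc y by (simp add: m_assoc)
  also have "h \<otimes> (inv h \<otimes> y) = y" using hc y by (rule mult_inv_cancel)
  finally have "(a \<otimes> h) \<otimes> (inv h \<otimes> y) = a \<otimes> y" .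
  then have "s (a \<otimes> h) * t (inv h \<otimes> y) = s a * t y" using e1 e2 one_plus_eq by metis
  moreover have "t (inv h \<otimes> y) \<noteq> 0" using ctri_B[OF T hy] by simp
  ultimately show ?thesis by (simp add: field_simps)
qed

lemma scaleA_ne:
  assumes T: "ctri x y p q r s t u" and y: "y \<in> carrier G" and h: "h \<in> H" and h1: "h \<noteq> \<one>"
  shows "t y / t (inv h \<otimes> y) \<noteq> 1"
proof
  assume "t y / t (inv h \<otimes> y) = 1"
  moreover have yy: "y \<in> y <# H" using lcos_self[OF y] .
  moreover have hy: "inv h \<otimes> y \<in> y <# H" using lcos_l[OF y yy H_inv[OF h]] .
  moreover have "t (inv h \<otimes> y) \<noteq> 0" using ctri_B[OF T hy] by simp
  ultimately have "t y = t (inv h \<otimes> y)" by simp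
  then have "y = inv h \<otimes> y" using ctri_injB[OF T y yy hy] by simp
  then have "inv h = \<one>" using y H_carr[OF h] by simp
  then have "inv (inv h) = \<one>" by simp
  then show False using h1 H_carr[OF h] by simp
qed

lemma scaleB:
  assumes T: "ctri x y p q r s t u" and x: "x \<in> carrier G" and y: "y \<in> carrier G" and h: "h \<in> H"
    and b: "b \<in> y <# H"
  shows "t (h \<otimes> b) = (s x / s (x \<otimes> inv h)) * t b"
proof -
  have hc: "h \<in> carrier G" using H_carr h .
  have bc: "b \<in> carrier G" using lcos_carr[OF y b] .
  have hb: "h \<otimes> b \<in> y <# H" using lcos_l[OF y b h] .
  have xx: "x \<in> x <# H" using lcos_self[OF x] .
  have xh: "x \<otimes> inv h \<in> x <# H" using lcos_r[OF x xx H_inv[OF h]] .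
  have e1: "1 + s x * t b * u (x \<otimes> b) = 0" using ctri_eq[OF T x y xx b] .
  have e2: "1 + s (x \<otimes> inv h) * t (h \<otimes> b) * u ((x \<otimes> inv h) \<otimes> (h \<otimes> b)) = 0" using ctri_eq[OF T x y xh hb] .
  have "(x \<otimes> inv h) \<otimes> (h \<otimes> b) = x \<otimes> (inv h \<otimes> (h \<otimes> b))" using x hc bc by (simp add: m_assoc)
  also have "inv h \<otimes> (h \<otimes> b) = b" using hc bc by (rule inv_mult_cancel2)
  finally have "(x \<otimes> inv h) \<otimes> (h \<otimes> b) = x \<otimes> b" .
  then have "s (x \<otimes> inv h) * t (h \<otimes> b) = s x * t b" using e1 e2 one_plus_eq by metis
  moreover have "s (x \<otimes> inv h) \<noteq> 0" using ctri_A[OF T xh] by simp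
  ultimately show ?thesis by (simp add: field_simps)
qed

lemma scaleB_ne:
  assumes T: "ctri x y p q r s t u" and x: "x \<in> carrier G" and h: "h \<in> H" and h1: "h \<noteq> \<one>"
  shows "s x / s (x \<otimes> inv h) \<noteq> 1"
proof
  assume "s x / s (x \<otimes> inv h) = 1"
  moreover have xx: "x \<in> x <# H" using lcos_self[OF x] .
  moreover have xh: "x \<otimes> inv h \<in> x <# H" using lcos_r[OF x xx H_inv[OF h]] .
  moreover have "s (x \<otimes> inv h) \<noteq> 0" using ctri_A[OF T xh] by simp
  ultimately have "s x = s (x \<otimes> inv h)" by simp
  then have "x = x \<otimes> inv h" using ctri_injA[OF T x xx xh] by simp
  then have "inv h = \<one>" using x H_carr[OF h] by simp
  then have "inv (inv h) = \<one>" by simp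
  then show False using h1 H_carr[OF h] by simp
qed

lemma scaleC:
  assumes T: "ctri x y p q r s t u" and x: "x \<in> carrier G" and y: "y \<in> carrier G" and h: "h \<in> H"
    and c: "c \<in> (x \<otimes> y) <# H"
  shows "u (h \<otimes> c) = (s x / s (h \<otimes> x)) * u c"
proof -
  have hc: "h \<in> carrier G" using H_carr h .
  have xyc: "x \<otimes> y \<in> carrier G" using x y by simp
  have cc: "c \<in> carrier G" using lcos_carr[OF xyc c] .
  have xx: "x \<in> x <# H" using lcos_self[OF x] .
  have hx: "h \<otimes> x \<in> x <# H" using lcos_l[OF x xx h] .
  have b: "inv x \<otimes> c \<in> y <# H" using lcos_linv[OF x y c] .
  have e1: "1 + s x * t (inv x \<otimes> c) * u (x \<otimes> (inv x \<otimes> c)) = 0" using ctri_eq[OF T x y xx b] .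
  have e2: "1 + s (h \<otimes> x) * t (inv x \<otimes> c) * u ((h \<otimes> x) \<otimes> (inv x \<otimes> c)) = 0" using ctri_eq[OF T x y hx b] .
  have q1: "x \<otimes> (inv x \<otimes> c) = c" using x cc by (rule mult_inv_cancel)
  have q2: "(h \<otimes> x) \<otimes> (inv x \<otimes> c) = h \<otimes> c" using x cc hc by (simp add: m_assoc mult_inv_cancel)
  have tz: "t (inv x \<otimes> c) \<noteq> 0" using ctri_B[OF T b] by simp
  have "1 + s x * t (inv x \<otimes> c) * u c = 1 + s (h \<otimes> x) * t (inv x \<otimes> c) * u (h \<otimes> c)"
    using e1 e2 q1 q2 by simp
  then have "s x * t (inv x \<otimes> c) * u c = s (h \<otimes> x) * t (inv x \<otimes> c) * u (h \<otimes> c)"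
    by (rule add_left_cancel[THEN iffD1])
  then have "t (inv x \<otimes> c) * (s x * u c) = t (inv x \<otimes> c) * (s (h \<otimes> x) * u (h \<otimes> c))"
    by (simp add: ac_simps)
  then have "s x * u c = s (h \<otimes> x) * u (h \<otimes> c)" using tz by simp
  moreover have "s (h \<otimes> x) \<noteq> 0" using ctri_A[OF T hx] by simp
  ultimately show ?thesis by (simp add: field_simps)
qed

lemma scaleC_ne:
  assumes T: "ctri x y p q r s t u" and x: "x \<in> carrier G" and h: "h \<in> H" and h1: "h \<noteq> \<one>"
  shows "s x / s (h \<otimes> x) \<noteq> 1"
proof
  assume "s x / s (h \<otimes> x) = 1"
  moreover have xx: "x \<in> x <# H" using lcos_self[OF x] .
  moreover have hx: "h \<otimes> x \<in> x <# H" using lcos_l[OF x xx h] .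
  moreover have "s (h \<otimes> x) \<noteq> 0" using ctri_A[OF T hx] by simp
  ultimately have "s x = s (h \<otimes> x)" by simp
  then have "x = h \<otimes> x" using ctri_injA[OF T x xx hx] by simp
  then have "h = \<one>" using x H_carr[OF h] by simp
  then show False using h1 by simp
qed

end

lemma cross_from_det: "det3 p q r \<noteq> 0 \<Longrightarrow> cross3 q r \<noteq> (0,0,0)"
  by (auto simp: det3_dot dot3_def split: prod.split)

context pnet begin

lemma exists_h: "\<exists>h\<in>H. h \<noteq> \<one>"
proof -
  have "2 \<le> card (H - {\<one>})" using ord fin_H H_one by (simp add: card_Diff_singleton)
  then have "H - {\<one>} \<noteq> {}" by (metis card.empty not_numeral_le_zero)
  then show ?thesis by blast
qed

lemma ctri_cross:
  assumes "ctri x y p q r s t u"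
  shows "cross3 q r \<noteq> (0,0,0)" "cross3 r p \<noteq> (0,0,0)" "cross3 p q \<noteq> (0,0,0)"
proof -
  have D: "det3 p q r \<noteq> 0" using ctri_D[OF assms] .
  show "cross3 q r \<noteq> (0,0,0)" using cross_from_det[OF D] .
  have "det3 q r p \<noteq> 0" using D det3_cyc[of p q r] by simp
  then show "cross3 r p \<noteq> (0,0,0)" using cross_from_det by blast
  have "det3 r p q \<noteq> 0" using D det3_cyc[of p q r] det3_cyc[of q r p] by simp
  then show "cross3 p q \<noteq> (0,0,0)" using cross_from_det by blast
qed

lemma pairA:
  assumes T1: "ctri x y p q r s t u" and T2: "ctri x y' p' q' r' s' t' u'"
    and x: "x \<in> carrier G" and y: "y \<in> carrier G" and y': "y' \<in> carrier G"
  shows "{proj_pt q, proj_pt r} = {proj_pt q', proj_pt r'}"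
proof -
  obtain h where h: "h \<in> H" "h \<noteq> \<one>" using exists_h by blast
  have fI: "finite (x <# H)" using fin_lcos[OF x] .
  have cI: "3 \<le> card (x <# H)" using card_lcos[OF x] ord by simp
  have iI: "inj_on \<alpha> (x <# H)" using inj_on_subset[OF inj(1)] lcos_carr[OF x] by blast
  have mI: "\<forall>i\<in>x <# H. i \<otimes> h \<in> x <# H" using lcos_r[OF x _ h(1)] by blast
  have p1: "\<forall>i\<in>x <# H. s i \<noteq> 0 \<and> \<alpha> i = proj_pt (vadd q (scale3 (s i) r))" using ctri_A[OF T1] by blast
  have p2: "\<forall>i\<in>x <# H. s' i \<noteq> 0 \<and> \<alpha> i = proj_pt (vadd q' (scale3 (s' i) r'))" using ctri_A[OF T2] by blast
  have sc1: "\<forall>i\<in>x <# H. s (i \<otimes> h) = (t y / t (inv h \<otimes> y)) * s i" using scaleA[OF T1 x y h(1)] by blast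
  have sc2: "\<forall>i\<in>x <# H. s' (i \<otimes> h) = (t' y' / t' (inv h \<otimes> y')) * s' i" using scaleA[OF T2 x y' h(1)] by blast
  have l1: "t y / t (inv h \<otimes> y) \<noteq> 1" using scaleA_ne[OF T1 y h] .
  show ?thesis using pair_eq[OF fI cI iI mI ctri_cross(1)[OF T1] ctri_cross(1)[OF T2] p1 p2 sc1 l1 sc2] .
qed

lemma pairB:
  assumes T1: "ctri x y p q r s t u" and T2: "ctri x' y p' q' r' s' t' u'"
    and x: "x \<in> carrier G" and y: "y \<in> carrier G" and x': "x' \<in> carrier G"
  shows "{proj_pt r, proj_pt p} = {proj_pt r', proj_pt p'}"
proof -
  obtain h where h: "h \<in> H" "h \<noteq> \<one>" using exists_h by blast
  have fI: "finite (y <# H)" using fin_lcos[OF y] .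
  have cI: "3 \<le> card (y <# H)" using card_lcos[OF y] ord by simp
  have iI: "inj_on \<beta> (y <# H)" using inj_on_subset[OF inj(2)] lcos_carr[OF y] by blast
  have mI: "\<forall>i\<in>y <# H. h \<otimes> i \<in> y <# H" using lcos_l[OF y _ h(1)] by blast
  have p1: "\<forall>i\<in>y <# H. t i \<noteq> 0 \<and> \<beta> i = proj_pt (vadd r (scale3 (t i) p))" using ctri_B[OF T1] by blast
  have p2: "\<forall>i\<in>y <# H. t' i \<noteq> 0 \<and> \<beta> i = proj_pt (vadd r' (scale3 (t' i) p'))" using ctri_B[OF T2] by blast
  have sc1: "\<forall>i\<in>y <# H. t (h \<otimes> i) = (s x / s (x \<otimes> inv h)) * t i" using scaleB[OF T1 x y h(1)] by blast
  have sc2: "\<forall>i\<in>y <# H. t' (h \<otimes> i) = (s' x' / s' (x' \<otimes> inv h)) * t' i" using scaleB[OF T2 x' y h(1)] by blast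
  have l1: "s x / s (x \<otimes> inv h) \<noteq> 1" using scaleB_ne[OF T1 x h] .
  show ?thesis using pair_eq[OF fI cI iI mI ctri_cross(2)[OF T1] ctri_cross(2)[OF T2] p1 p2 sc1 l1 sc2] .
qed

lemma pairC:
  assumes T1: "ctri x y p q r s t u" and T2: "ctri x' y' p' q' r' s' t' u'"
    and x: "x \<in> carrier G" and y: "y \<in> carrier G" and x': "x' \<in> carrier G" and y': "y' \<in> carrier G"
    and e: "x \<otimes> y = x' \<otimes> y'"
  shows "{proj_pt p, proj_pt q} = {proj_pt p', proj_pt q'}"
proof -
  obtain h where h: "h \<in> H" "h \<noteq> \<one>" using exists_h by blast
  have xy: "x \<otimes> y \<in> carrier G" using x y by simp
  have fI: "finite ((x \<otimes> y) <# H)" using fin_lcos[OF xy] .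
  have cI: "3 \<le> card ((x \<otimes> y) <# H)" using card_lcos[OF xy] ord by simp
  have iI: "inj_on \<gamma> ((x \<otimes> y) <# H)" using inj_on_subset[OF inj(3)] lcos_carr[OF xy] by blast
  have mI: "\<forall>i\<in>(x \<otimes> y) <# H. h \<otimes> i \<in> (x \<otimes> y) <# H" using lcos_l[OF xy _ h(1)] by blast
  have p1: "\<forall>i\<in>(x \<otimes> y) <# H. u i \<noteq> 0 \<and> \<gamma> i = proj_pt (vadd p (scale3 (u i) q))" using ctri_C[OF T1] by blast
  have p2: "\<forall>i\<in>(x \<otimes> y) <# H. u' i \<noteq> 0 \<and> \<gamma> i = proj_pt (vadd p' (scale3 (u' i) q'))"
    using ctri_C[OF T2] e by simp
  have sc1: "\<forall>i\<in>(x \<otimes> y) <# H. u (h \<otimes> i) = (s x / s (h \<otimes> x)) * u i" using scaleC[OF T1 x y h(1)] by blast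
  have sc2: "\<forall>i\<in>(x \<otimes> y) <# H. u' (h \<otimes> i) = (s' x' / s' (h \<otimes> x')) * u' i"
    using scaleC[OF T2 x' y' h(1)] e by simp
  have l1: "s x / s (h \<otimes> x) \<noteq> 1" using scaleC_ne[OF T1 x h] .
  show ?thesis using pair_eq[OF fI cI iI mI ctri_cross(3)[OF T1] ctri_cross(3)[OF T2] p1 p2 sc1 l1 sc2] .
qed

end

definition sd :: "'a set \<Rightarrow> 'a set \<Rightarrow> 'a set" where "sd X Y = (X - Y) \<union> (Y - X)"

lemma sd_mem: "z \<in> sd X Y \<longleftrightarrow> (z \<in> X) \<noteq> (z \<in> Y)" by (auto simp: sd_def)

lemma sd_split:
  assumes "finite e" "S \<subseteq> M" "finite M"
  shows "card (sd S e) = card (e - M) + card (sd S (e \<inter> M))"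
proof -
  have "sd S e = (e - M) \<union> sd S (e \<inter> M)" using assms(2) by (auto simp: sd_def)
  moreover have "(e - M) \<inter> sd S (e \<inter> M) = {}" using assms(2) by (auto simp: sd_def)
  moreover have "finite S" using assms(2,3) finite_subset by blast
  then have "finite (sd S (e \<inter> M))" using assms(1) by (auto simp: sd_def)
  ultimately show ?thesis using assms(1) by (simp add: card_Un_disjoint)
qed

lemma count4:
  assumes d: "X \<noteq> Y" "Y \<noteq> Z" "X \<noteq> Z" and fe: "finite e" and ne: "e \<noteq> {}"
    and c1: "card (sd {Y,Z} e) = 2" and c2: "card (sd {Z,X} e) = 2" and c3: "card (sd {X,Y} e) = 2"
  shows "\<exists>W. W \<notin> {X,Y,Z} \<and> e = {X,Y,Z,W}"
proof -
  let ?M = "{X,Y,Z}" and ?k = "card (e - {X,Y,Z})"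
  have e1: "?k + card (sd {Y,Z} (e \<inter> ?M)) = 2" using sd_split[OF fe, of "{Y,Z}" ?M] c1 by simp
  have e2: "?k + card (sd {Z,X} (e \<inter> ?M)) = 2" using sd_split[OF fe, of "{Z,X}" ?M] c2 by simp
  have e3: "?k + card (sd {X,Y} (e \<inter> ?M)) = 2" using sd_split[OF fe, of "{X,Y}" ?M] c3 by simp
  have all: "X \<in> e \<and> Y \<in> e \<and> Z \<in> e \<and> ?k = 1"
  proof (cases "X \<in> e"; cases "Y \<in> e"; cases "Z \<in> e")
    assume "X \<in> e" "Y \<in> e" "Z \<in> e"
    then have "e \<inter> ?M = {X,Y,Z}" by auto
    then have "sd {X,Y} (e \<inter> ?M) = {Z}" using d by (auto simp: sd_def)
    then show ?thesis using e3 \<open>X \<in> e\<close> \<open>Y \<in> e\<close> \<open>Z \<in> e\<close> by simp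
  next
    assume "X \<in> e" "Y \<in> e" "Z \<notin> e"
    then have "e \<inter> ?M = {X,Y}" using d by auto
    then have "sd {X,Y} (e \<inter> ?M) = {}" "sd {Y,Z} (e \<inter> ?M) = {X,Z}" using d by (auto simp: sd_def)
    then show ?thesis using e1 e3 d by simp
  next
    assume "X \<in> e" "Y \<notin> e" "Z \<in> e"
    then have "e \<inter> ?M = {X,Z}" using d by auto
    then have "sd {Z,X} (e \<inter> ?M) = {}" "sd {Y,Z} (e \<inter> ?M) = {X,Y}" using d by (auto simp: sd_def)
    then show ?thesis using e1 e2 d by simp
  next
    assume "X \<in> e" "Y \<notin> e" "Z \<notin> e"
    then have "e \<inter> ?M = {X}" using d by auto
    then have "sd {Y,Z} (e \<inter> ?M) = {X,Y,Z}" using d by (auto simp: sd_def)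
    then show ?thesis using e1 d by simp
  next
    assume "X \<notin> e" "Y \<in> e" "Z \<in> e"
    then have "e \<inter> ?M = {Y,Z}" using d by auto
    then have "sd {Y,Z} (e \<inter> ?M) = {}" "sd {X,Y} (e \<inter> ?M) = {X,Z}" using d by (auto simp: sd_def)
    then show ?thesis using e1 e3 d by simp
  next
    assume "X \<notin> e" "Y \<in> e" "Z \<notin> e"
    then have "e \<inter> ?M = {Y}" using d by auto
    then have "sd {Z,X} (e \<inter> ?M) = {X,Y,Z}" using d by (auto simp: sd_def)
    then show ?thesis using e2 d by simp
  next
    assume "X \<notin> e" "Y \<notin> e" "Z \<in> e"
    then have "e \<inter> ?M = {Z}" using d by auto
    then have "sd {X,Y} (e \<inter> ?M) = {X,Y,Z}" using d by (auto simp: sd_def)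
    then show ?thesis using e3 d by simp
  next
    assume "X \<notin> e" "Y \<notin> e" "Z \<notin> e"
    then have "e \<inter> ?M = {}" by auto
    then have "sd {X,Y} (e \<inter> ?M) = {X,Y}" by (auto simp: sd_def)
    then have "?k = 0" using e3 d by simp
    then have "e - ?M = {}" using fe by simp
    then have "e = {}" using \<open>e \<inter> ?M = {}\<close> by auto
    then show ?thesis using ne by simp
  qed
  then obtain W where W: "e - ?M = {W}" using card_1_singletonE by metis
  then have "W \<notin> ?M" by auto
  moreover have "e = {X,Y,Z,W}" using W all by auto
  ultimately show ?thesis by blast
qed

lemma det3_zero1: "det3 (0,0,0) q r = 0" by (simp add: det3_def split: prod.split)
lemma det3_zero2: "det3 p (0,0,0) r = 0" by (simp add: det3_def split: prod.split)
lemma det3_zero3: "det3 p q (0,0,0) = 0" by (simp add: det3_def split: prod.split)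

lemma comb_on_line:
  assumes "cross3 v w \<noteq> (0,0,0)"
  shows "proj_pt (vadd v (scale3 c w)) \<in> line_thru (proj_pt v) (proj_pt w)"
proof -
  have nz: "vadd v (scale3 c w) \<noteq> (0,0,0)" using comb_nonzero[OF assms] .
  have "vadd v (scale3 c w) = vadd (scale3 1 v) (scale3 c w)" by simp
  then have "det3 v w (vadd v (scale3 c w)) = 1 * det3 v w v + c * det3 v w w" by (metis det3_lin3)
  then have "det3 v w (vadd v (scale3 c w)) = 0" by (simp add: det3_rep13 det3_rep23)
  then show ?thesis unfolding line_thru_def using is_point_proj[OF nz] pcollinear_proj by blast
qed

context pnet begin

definition tri where
  "tri x y = (SOME z. case z of (p,q,r,s,t,u) \<Rightarrow> ctri x y p q r s t u)"

lemma tri_ctri: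
  assumes "x \<in> carrier G" "y \<in> carrier G"
  shows "case tri x y of (p,q,r,s,t,u) \<Rightarrow> ctri x y p q r s t u"
proof -
  obtain p q r s t u where "ctri x y p q r s t u" using ctri_exists[OF assms] by blast
  then have "\<exists>z. case z of (p,q,r,s,t,u) \<Rightarrow> ctri x y p q r s t u" by (intro exI[of _ "(p,q,r,s,t,u)"]) simp
  then show ?thesis unfolding tri_def by (rule someI_ex)
qed

definition VA where "VA x y = (case tri x y of (p,q,r,s,t,u) \<Rightarrow> {proj_pt q, proj_pt r})"
definition VB where "VB x y = (case tri x y of (p,q,r,s,t,u) \<Rightarrow> {proj_pt r, proj_pt p})"
definition VC where "VC x y = (case tri x y of (p,q,r,s,t,u) \<Rightarrow> {proj_pt p, proj_pt q})"

definition Aset where "Aset x = VA x \<one>"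
definition Bset where "Bset y = VB \<one> y"
definition Cset where "Cset z = VC z \<one>"

lemma tri_obtain:
  assumes "x \<in> carrier G" "y \<in> carrier G"
  obtains p q r s t u where "tri x y = (p,q,r,s,t,u)" "ctri x y p q r s t u"
  using tri_ctri[OF assms] by (cases "tri x y") auto

lemma VA_eq: "x \<in> carrier G \<Longrightarrow> y \<in> carrier G \<Longrightarrow> VA x y = Aset x"
proof -
  assume x: "x \<in> carrier G" and y: "y \<in> carrier G"
  obtain p q r s t u where e1: "tri x y = (p,q,r,s,t,u)" "ctri x y p q r s t u" using tri_obtain[OF x y] by blast
  obtain p' q' r' s' t' u' where e2: "tri x \<one> = (p',q',r',s',t',u')" "ctri x \<one> p' q' r' s' t' u'"
    using tri_obtain[OF x one_closed] by blast
  show ?thesis using pairA[OF e1(2) e2(2) x y one_closed] e1(1) e2(1) by (simp add: VA_def Aset_def)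
qed

lemma VB_eq: "x \<in> carrier G \<Longrightarrow> y \<in> carrier G \<Longrightarrow> VB x y = Bset y"
proof -
  assume x: "x \<in> carrier G" and y: "y \<in> carrier G"
  obtain p q r s t u where e1: "tri x y = (p,q,r,s,t,u)" "ctri x y p q r s t u" using tri_obtain[OF x y] by blast
  obtain p' q' r' s' t' u' where e2: "tri \<one> y = (p',q',r',s',t',u')" "ctri \<one> y p' q' r' s' t' u'"
    using tri_obtain[OF one_closed y] by blast
  show ?thesis using pairB[OF e1(2) e2(2) x y one_closed] e1(1) e2(1) by (simp add: VB_def Bset_def)
qed

lemma VC_eq: "x \<in> carrier G \<Longrightarrow> y \<in> carrier G \<Longrightarrow> VC x y = Cset (x \<otimes> y)"
proof -
  assume x: "x \<in> carrier G" and y: "y \<in> carrier G"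
  have xy: "x \<otimes> y \<in> carrier G" using x y by simp
  obtain p q r s t u where e1: "tri x y = (p,q,r,s,t,u)" "ctri x y p q r s t u" using tri_obtain[OF x y] by blast
  obtain p' q' r' s' t' u' where e2: "tri (x \<otimes> y) \<one> = (p',q',r',s',t',u')" "ctri (x \<otimes> y) \<one> p' q' r' s' t' u'"
    using tri_obtain[OF xy one_closed] by blast
  have "x \<otimes> y = (x \<otimes> y) \<otimes> \<one>" using xy by simp
  then show ?thesis using pairC[OF e1(2) e2(2) x y xy one_closed] e1(1) e2(1) by (simp add: VC_def Cset_def)
qed

lemma tri_props:
  assumes x: "x \<in> carrier G" and y: "y \<in> carrier G"
  shows "\<exists>P Q R. is_point P \<and> is_point Q \<and> is_point R \<and> \<not> pcollinear P Q R \<and>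
     VA x y = {Q,R} \<and> VB x y = {R,P} \<and> VC x y = {P,Q} \<and>
     \<alpha> ` (x <# H) \<subseteq> line_thru Q R \<and> \<beta> ` (y <# H) \<subseteq> line_thru R P \<and>
     \<gamma> ` ((x \<otimes> y) <# H) \<subseteq> line_thru P Q"
proof -
  obtain p q r s t u where e: "tri x y = (p,q,r,s,t,u)" and T: "ctri x y p q r s t u" using tri_obtain[OF x y] by blast
  have D: "det3 p q r \<noteq> 0" using ctri_D[OF T] .
  have nz: "p \<noteq> (0,0,0)" "q \<noteq> (0,0,0)" "r \<noteq> (0,0,0)" using D det3_zero1 det3_zero2 det3_zero3 by metis+
  have c: "cross3 q r \<noteq> (0,0,0)" "cross3 r p \<noteq> (0,0,0)" "cross3 p q \<noteq> (0,0,0)" using ctri_cross[OF T] by blast+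
  have l1: "\<alpha> ` (x <# H) \<subseteq> line_thru (proj_pt q) (proj_pt r)"
    using ctri_A[OF T] comb_on_line[OF c(1)] by auto
  have l2: "\<beta> ` (y <# H) \<subseteq> line_thru (proj_pt r) (proj_pt p)"
    using ctri_B[OF T] comb_on_line[OF c(2)] by auto
  have l3: "\<gamma> ` ((x \<otimes> y) <# H) \<subseteq> line_thru (proj_pt p) (proj_pt q)"
    using ctri_C[OF T] comb_on_line[OF c(3)] by auto
  have "\<not> pcollinear (proj_pt p) (proj_pt q) (proj_pt r)" using D by (simp add: pcollinear_proj)
  moreover have "VA x y = {proj_pt q, proj_pt r}" "VB x y = {proj_pt r, proj_pt p}" "VC x y = {proj_pt p, proj_pt q}"
    using e by (simp_all add: VA_def VB_def VC_def)
  ultimately show ?thesis using is_point_proj[OF nz(1)] is_point_proj[OF nz(2)] is_point_proj[OF nz(3)] l1 l2 l3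
    by blast
qed

lemma struct:
  assumes x: "x \<in> carrier G" and y: "y \<in> carrier G"
  shows "\<exists>P Q R. is_point P \<and> is_point Q \<and> is_point R \<and> \<not> pcollinear P Q R \<and>
     P \<noteq> Q \<and> Q \<noteq> R \<and> P \<noteq> R \<and>
     Aset x = {Q,R} \<and> Bset y = {R,P} \<and> Cset (x \<otimes> y) = {P,Q}"
proof -
  from tri_props[OF x y] obtain P Q R where PQR0: "is_point P \<and> is_point Q \<and> is_point R \<and> \<not> pcollinear P Q R \<and>
     VA x y = {Q,R} \<and> VB x y = {R,P} \<and> VC x y = {P,Q}"
    by (elim exE conjE) (intro that, simp)
  then have PQR: "is_point P" "is_point Q" "is_point R" "\<not> pcollinear P Q R"
     "VA x y = {Q,R}" "VB x y = {R,P}" "VC x y = {P,Q}" by simp_all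
  have pc1: "pcollinear P P R" using pcollinear_points[OF PQR(1) PQR(1) PQR(3)] det3_rep12 by simp
  have pc2: "pcollinear P Q Q" using pcollinear_points[OF PQR(1) PQR(2) PQR(2)] det3_rep23 by simp
  have pc3: "pcollinear P Q P" using pcollinear_points[OF PQR(1) PQR(2) PQR(1)] det3_rep13 by simp
  have d: "P \<noteq> Q" "Q \<noteq> R" "P \<noteq> R"
  proof -
    show "P \<noteq> Q" proof assume "P = Q" then show False using pc1 PQR(4) by simp qed
    show "Q \<noteq> R" proof assume "Q = R" then show False using pc2 PQR(4) by simp qed
    show "P \<noteq> R" proof assume "P = R" then show False using pc3 PQR(4) by simp qed
  qed
  have "Aset x = {Q,R}" "Bset y = {R,P}" "Cset (x \<otimes> y) = {P,Q}"
    using PQR VA_eq[OF x y] VB_eq[OF x y] VC_eq[OF x y] by simp_all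
  then show ?thesis using PQR(1-4) d by (intro exI[of _ P] exI[of _ Q] exI[of _ R]) simp
qed

lemma linesA:
  assumes x: "x \<in> carrier G" and A: "Aset x = {Q,R}"
  shows "\<alpha> ` (x <# H) \<subseteq> line_thru Q R"
proof -
  from tri_props[OF x one_closed] obtain P' Q' R' where e00: "VA x \<one> = {Q',R'} \<and> \<alpha> ` (x <# H) \<subseteq> line_thru Q' R'"
    by (elim exE conjE) (intro that, simp)
  then have e0: "VA x \<one> = {Q',R'}" "\<alpha> ` (x <# H) \<subseteq> line_thru Q' R'" by simp_all
  have e: "Aset x = {Q',R'}" "\<alpha> ` (x <# H) \<subseteq> line_thru Q' R'" using e0 VA_eq[OF x one_closed] by simp_all
  have "line_thru Q R = line_thru Q' R'" using A e(1) line_thru_sym by (metis doubleton_eq_iff)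
  then show ?thesis using e(2) by simp
qed

lemma linesB:
  assumes y: "y \<in> carrier G" and B: "Bset y = {R,P}"
  shows "\<beta> ` (y <# H) \<subseteq> line_thru R P"
proof -
  from tri_props[OF one_closed y] obtain P' Q' R' where e00: "VB \<one> y = {R',P'} \<and> \<beta> ` (y <# H) \<subseteq> line_thru R' P'"
    by (elim exE conjE) (intro that, simp)
  then have e0: "VB \<one> y = {R',P'}" "\<beta> ` (y <# H) \<subseteq> line_thru R' P'" by simp_all
  have e: "Bset y = {R',P'}" "\<beta> ` (y <# H) \<subseteq> line_thru R' P'" using e0 VB_eq[OF one_closed y] by simp_all
  have "line_thru R P = line_thru R' P'" using B e(1) line_thru_sym by (metis doubleton_eq_iff)
  then show ?thesis using e(2) by simp
qed

lemma linesC: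
  assumes z: "z \<in> carrier G" and C: "Cset z = {P,Q}"
  shows "\<gamma> ` (z <# H) \<subseteq> line_thru P Q"
proof -
  from tri_props[OF z one_closed] obtain P' Q' R' where e00: "VC z \<one> = {P',Q'} \<and> \<gamma> ` ((z \<otimes> \<one>) <# H) \<subseteq> line_thru P' Q'"
    by (elim exE conjE) (intro that, simp)
  then have e0: "VC z \<one> = {P',Q'}" "\<gamma> ` ((z \<otimes> \<one>) <# H) \<subseteq> line_thru P' Q'" by simp_all
  have e: "Cset z = {P',Q'}" "\<gamma> ` (z <# H) \<subseteq> line_thru P' Q'" using e0 VC_eq[OF z one_closed] z by simp_all
  have "line_thru P Q = line_thru P' Q'" using C e(1) line_thru_sym by (metis doubleton_eq_iff)
  then show ?thesis using e(2) by simp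
qed

end

lemma sd_swap: "sd a b = sd c d \<Longrightarrow> sd b d = sd c a"
  by (auto simp: sd_def set_eq_iff)
lemma sd_cancel: "sd (sd a b) (sd c b) = sd a c"
  by (auto simp: sd_def)
lemma sd_hom: "sd a' b1 = sd ax by' \<Longrightarrow> sd a' a1 = sd (sd ax a1) (sd by' b1)"
  by (auto simp: sd_def set_eq_iff)
lemma sd_back: "sd a1 (sd ax a1) = ax" by (auto simp: sd_def)
lemma sd_empty: "sd a a = {}" by (auto simp: sd_def)
lemma sd_empty_iff: "sd a b = {} \<longleftrightarrow> a = b" by (auto simp: sd_def)
lemma sd_tri: "P \<noteq> Q \<Longrightarrow> Q \<noteq> R \<Longrightarrow> P \<noteq> R \<Longrightarrow> sd {Q,R} {R,P} = {P,Q}" by (auto simp: sd_def)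

context pnet begin

lemma Cdef: "x \<in> carrier G \<Longrightarrow> y \<in> carrier G \<Longrightarrow> Cset (x \<otimes> y) = sd (Aset x) (Bset y)"
proof -
  assume x: "x \<in> carrier G" and y: "y \<in> carrier G"
  from struct[OF x y] obtain P Q R where h: "is_point P \<and> is_point Q \<and> is_point R \<and> \<not> pcollinear P Q R \<and>
     P \<noteq> Q \<and> Q \<noteq> R \<and> P \<noteq> R \<and>
     Aset x = {Q,R} \<and> Bset y = {R,P} \<and> Cset (x \<otimes> y) = {P,Q}"
    by (elim exE conjE) (intro that, simp)
  then have "Aset x = {Q,R}" "Bset y = {R,P}" "Cset (x \<otimes> y) = {P,Q}" "P \<noteq> Q" "Q \<noteq> R" "P \<noteq> R"
    by blast+
  then show ?thesis using sd_tri[of P Q R] by simp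
qed

lemma card2A: "x \<in> carrier G \<Longrightarrow> finite (Aset x) \<and> card (Aset x) = 2"
proof -
  assume x: "x \<in> carrier G"
  from struct[OF x one_closed] obtain P Q R where h: "is_point P \<and> is_point Q \<and> is_point R \<and> \<not> pcollinear P Q R \<and>
     P \<noteq> Q \<and> Q \<noteq> R \<and> P \<noteq> R \<and>
     Aset x = {Q,R} \<and> Bset \<one> = {R,P} \<and> Cset (x \<otimes> \<one>) = {P,Q}"
    by (elim exE conjE) (intro that, simp)
  then have "Aset x = {Q,R}" "Q \<noteq> R" by blast+
  then show ?thesis by simp
qed

lemma card2B: "x \<in> carrier G \<Longrightarrow> finite (Bset x) \<and> card (Bset x) = 2"
proof -
  assume x: "x \<in> carrier G"
  from struct[OF one_closed x] obtain P Q R where h: "is_point P \<and> is_point Q \<and> is_point R \<and> \<not> pcollinear P Q R \<and>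
     P \<noteq> Q \<and> Q \<noteq> R \<and> P \<noteq> R \<and>
     Aset \<one> = {Q,R} \<and> Bset x = {R,P} \<and> Cset (\<one> \<otimes> x) = {P,Q}"
    by (elim exE conjE) (intro that, simp)
  then have "Bset x = {R,P}" "R \<noteq> P" by blast+
  then show ?thesis by simp
qed

lemma card2C: "x \<in> carrier G \<Longrightarrow> finite (Cset x) \<and> card (Cset x) = 2"
proof -
  assume x: "x \<in> carrier G"
  from struct[OF x one_closed] obtain P Q R where h: "is_point P \<and> is_point Q \<and> is_point R \<and> \<not> pcollinear P Q R \<and>
     P \<noteq> Q \<and> Q \<noteq> R \<and> P \<noteq> R \<and>
     Aset x = {Q,R} \<and> Bset \<one> = {R,P} \<and> Cset (x \<otimes> \<one>) = {P,Q}"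
    by (elim exE conjE) (intro that, simp)
  then have "Cset (x \<otimes> \<one>) = {P,Q}" "P \<noteq> Q" by blast+
  then show ?thesis using x by simp
qed

lemmas card2 = card2A card2B card2C

definition E where "E x = sd (Aset x) (Aset \<one>)"

lemma BE: "y \<in> carrier G \<Longrightarrow> sd (Bset y) (Bset \<one>) = E y"
proof -
  assume y: "y \<in> carrier G"
  have "Cset y = sd (Aset \<one>) (Bset y)" using Cdef[OF one_closed y] y by simp
  moreover have "Cset y = sd (Aset y) (Bset \<one>)" using Cdef[OF y one_closed] y by simp
  ultimately have "sd (Aset \<one>) (Bset y) = sd (Aset y) (Bset \<one>)" by simp
  then show ?thesis unfolding E_def by (rule sd_swap)
qed

lemma CE: "z \<in> carrier G \<Longrightarrow> sd (Cset z) (Cset \<one>) = E z"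
proof -
  assume z: "z \<in> carrier G"
  have "Cset z = sd (Aset z) (Bset \<one>)" using Cdef[OF z one_closed] z by simp
  moreover have "Cset \<one> = sd (Aset \<one>) (Bset \<one>)" using Cdef[OF one_closed one_closed] by simp
  ultimately show ?thesis unfolding E_def by (simp add: sd_cancel)
qed

lemma Ehom: "x \<in> carrier G \<Longrightarrow> y \<in> carrier G \<Longrightarrow> E (x \<otimes> y) = sd (E x) (E y)"
proof -
  assume x: "x \<in> carrier G" and y: "y \<in> carrier G"
  have xy: "x \<otimes> y \<in> carrier G" using x y by simp
  have "Cset (x \<otimes> y) = sd (Aset (x \<otimes> y)) (Bset \<one>)" using Cdef[OF xy one_closed] xy by simp
  then have "sd (Aset (x \<otimes> y)) (Bset \<one>) = sd (Aset x) (Bset y)" using Cdef[OF x y] by simp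
  then have "sd (Aset (x \<otimes> y)) (Aset \<one>) = sd (sd (Aset x) (Aset \<one>)) (sd (Bset y) (Bset \<one>))"
    by (rule sd_hom)
  then show ?thesis using BE[OF y] unfolding E_def by simp
qed

lemma E_one: "E \<one> = {}" unfolding E_def by (simp add: sd_empty)

lemma A_from_E: "x \<in> carrier G \<Longrightarrow> Aset x = sd (Aset \<one>) (E x)"
  unfolding E_def by (simp add: sd_def, blast)
lemma B_from_E: "x \<in> carrier G \<Longrightarrow> Bset x = sd (Bset \<one>) (E x)"
  using BE[of x] by (auto simp: sd_def)
lemma C_from_E: "x \<in> carrier G \<Longrightarrow> Cset x = sd (Cset \<one>) (E x)"
  using CE[of x] by (auto simp: sd_def)

lemma E_fin: "x \<in> carrier G \<Longrightarrow> finite (E x)"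
  using card2(1)[of x] card2(1)[OF one_closed] unfolding E_def by (auto simp: sd_def)

lemma E_four:
  assumes x: "x \<in> carrier G" and ne: "E x \<noteq> {}"
    and P: "Aset \<one> = {Q,R}" "Bset \<one> = {R,P}" "Cset \<one> = {P,Q}" "P \<noteq> Q" "Q \<noteq> R" "P \<noteq> R"
  shows "\<exists>W. W \<notin> {P,Q,R} \<and> E x = {P,Q,R,W}"
proof -
  have c1: "card (sd {Q,R} (E x)) = 2" using A_from_E[OF x] card2(1)[OF x] P(1) by simp
  have c2: "card (sd {R,P} (E x)) = 2" using B_from_E[OF x] card2(2)[OF x] P(2) by simp
  have c3: "card (sd {P,Q} (E x)) = 2" using C_from_E[OF x] card2(3)[OF x] P(3) by simp
  show ?thesis using count4[OF P(4) P(5) P(6) E_fin[OF x] ne c1 c2 c3] .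
qed

lemma E_dich:
  assumes x0: "x0 \<in> carrier G" and ne: "E x0 \<noteq> {}"
    and P: "Aset \<one> = {Q,R}" "Bset \<one> = {R,P}" "Cset \<one> = {P,Q}" "P \<noteq> Q" "Q \<noteq> R" "P \<noteq> R"
  shows "\<exists>W. W \<notin> {P,Q,R} \<and> E x0 = {P,Q,R,W} \<and> (\<forall>x\<in>carrier G. E x = {} \<or> E x = {P,Q,R,W})"
proof -
  obtain W where W: "W \<notin> {P,Q,R}" "E x0 = {P,Q,R,W}" using E_four[OF x0 ne P] by blast
  have "E x = {} \<or> E x = {P,Q,R,W}" if x: "x \<in> carrier G" for x
  proof (cases "E x = {}")
    case False
    obtain W' where W': "W' \<notin> {P,Q,R}" "E x = {P,Q,R,W'}" using E_four[OF x False P] by blast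
    show ?thesis
    proof (rule ccontr)
      assume nW: "\<not> (E x = {} \<or> E x = {P,Q,R,W})"
      then have WW: "W \<noteq> W'" using W' by auto
      define y where "y = inv x0 \<otimes> x"
      have y: "y \<in> carrier G" using x0 x y_def by simp
      have "x0 \<otimes> y = x" using x0 x y_def by (simp add: mult_inv_cancel)
      then have "E x = sd (E x0) (E y)" using Ehom[OF x0 y] by simp
      then have "E y = sd (E x0) (E x)" by (auto simp: sd_def)
      also have "\<dots> = {W, W'}" using W W' WW by (auto simp: sd_def)
      finally have Ey: "E y = {W, W'}" .
      then have "E y \<noteq> {}" by simp
      then obtain W'' where "E y = {P,Q,R,W''}" using E_four[OF y _ P] by blast
      then have "P \<in> {W,W'}" using Ey by auto
      then show False using W W' by auto
    qed
  qed simp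
  then show ?thesis using W by blast
qed

end

lemma less3: "(i::nat) < 3 \<Longrightarrow> i = 0 \<or> i = 1 \<or> i = 2" by arith

lemma all3: "(\<forall>i<3. P ([a,b,c] ! i)) \<longleftrightarrow> P a \<and> P b \<and> P c"
proof
  assume "\<forall>i<3. P ([a,b,c] ! i)"
  then show "P a \<and> P b \<and> P c" using spec[of _ 0] spec[of _ 1] spec[of _ 2] by (metis (no_types, lifting) One_nat_def less_numeral_extra(4) nth_Cons_0 nth_Cons_Suc numeral_2_eq_2 numeral_3_eq_3 lessI less_SucI zero_less_Suc)
next
  assume "P a \<and> P b \<and> P c"
  then show "\<forall>i<3. P ([a,b,c] ! i)" using less3 by fastforce
qed

context pnet begin

lemma subnet:
  assumes Kc: "K \<subseteq> carrier G"
    and c1: "\<And>a b. a \<in> K \<Longrightarrow> b \<in> K \<Longrightarrow> a \<otimes> b \<in> K"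
    and c2: "\<And>a c. a \<in> K \<Longrightarrow> c \<in> K \<Longrightarrow> inv a \<otimes> c \<in> K"
    and c3: "\<And>b c. b \<in> K \<Longrightarrow> c \<in> K \<Longrightarrow> c \<otimes> inv b \<in> K"
  shows "dual_3net (card K) (\<alpha> ` K) (\<beta> ` K) (\<gamma> ` K)"
proof -
  have fK: "finite K" using fin Kc finite_subset by blast
  have i1: "inj_on \<alpha> K" "inj_on \<beta> K" "inj_on \<gamma> K" using inj inj_on_subset Kc by blast+
  have sub: "\<alpha> ` K \<subseteq> L1" "\<beta> ` K \<subseteq> L2" "\<gamma> ` K \<subseteq> L3" using in_L Kc by blast+
  have P1: "Ball (\<alpha> ` K) is_point \<and> finite (\<alpha> ` K) \<and> card (\<alpha> ` K) = card K"
    using sub(1) net_facts(4) fK i1(1) by (auto simp: card_image)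
  have P2: "Ball (\<beta> ` K) is_point \<and> finite (\<beta> ` K) \<and> card (\<beta> ` K) = card K"
    using sub(2) net_facts(5) fK i1(2) by (auto simp: card_image)
  have P3: "Ball (\<gamma> ` K) is_point \<and> finite (\<gamma> ` K) \<and> card (\<gamma> ` K) = card K"
    using sub(3) net_facts(6) fK i1(3) by (auto simp: card_image)
  have D: "\<alpha> ` K \<inter> \<beta> ` K = {}" "\<alpha> ` K \<inter> \<gamma> ` K = {}" "\<beta> ` K \<inter> \<gamma> ` K = {}"
    using sub net_facts(7-9) by blast+
  have meets: "L \<inter> \<alpha> ` K \<noteq> {} \<and> L \<inter> \<beta> ` K \<noteq> {} \<and> L \<inter> \<gamma> ` K \<noteq> {}"
    if L: "is_line L" and two: "(L \<inter> \<alpha> ` K \<noteq> {} \<and> L \<inter> \<beta> ` K \<noteq> {}) \<or>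
      (L \<inter> \<alpha> ` K \<noteq> {} \<and> L \<inter> \<gamma> ` K \<noteq> {}) \<or> (L \<inter> \<beta> ` K \<noteq> {} \<and> L \<inter> \<gamma> ` K \<noteq> {})" for L
  proof -
    consider (ab) "L \<inter> \<alpha> ` K \<noteq> {}" "L \<inter> \<beta> ` K \<noteq> {}" | (ac) "L \<inter> \<alpha> ` K \<noteq> {}" "L \<inter> \<gamma> ` K \<noteq> {}"
      | (bc) "L \<inter> \<beta> ` K \<noteq> {}" "L \<inter> \<gamma> ` K \<noteq> {}" using two by blast
    then show ?thesis
    proof cases
      case ab
      then obtain a b where ab: "a \<in> K" "b \<in> K" "\<alpha> a \<in> L" "\<beta> b \<in> L" by blast
      have ac: "a \<in> carrier G" "b \<in> carrier G" using ab Kc by blast+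
      have "pcollinear (\<alpha> a) (\<beta> b) (\<gamma> (a \<otimes> b))" using coll[of a b "a \<otimes> b"] ac by simp
      moreover have "\<alpha> a \<noteq> \<beta> b" using D(1) ab by blast
      moreover have "is_point (\<gamma> (a \<otimes> b))" using net_facts(6) in_L(3) ac by simp
      ultimately have "\<gamma> (a \<otimes> b) \<in> L" using line_collinear_mem[OF L ab(3) ab(4)] by blast
      then show ?thesis using ab c1[OF ab(1,2)] by blast
    next
      case ac
      then obtain a c where ab: "a \<in> K" "c \<in> K" "\<alpha> a \<in> L" "\<gamma> c \<in> L" by blast
      have cc: "a \<in> carrier G" "c \<in> carrier G" using ab Kc by blast+
      have bc: "inv a \<otimes> c \<in> carrier G" using cc by simp
      have "a \<otimes> (inv a \<otimes> c) = c" using cc by (simp add: mult_inv_cancel)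
      then have "pcollinear (\<alpha> a) (\<beta> (inv a \<otimes> c)) (\<gamma> c)" using coll[OF cc(1) bc cc(2)] by simp
      then have "pcollinear (\<alpha> a) (\<gamma> c) (\<beta> (inv a \<otimes> c))" using pcollinear_23 by blast
      moreover have "\<alpha> a \<noteq> \<gamma> c" using D(2) ab by blast
      moreover have "is_point (\<beta> (inv a \<otimes> c))" using net_facts(5) in_L(2) bc by simp
      ultimately have "\<beta> (inv a \<otimes> c) \<in> L" using line_collinear_mem[OF L ab(3) ab(4)] by blast
      then show ?thesis using ab c2[OF ab(1,2)] by blast
    next
      case bc
      then obtain b c where ab: "b \<in> K" "c \<in> K" "\<beta> b \<in> L" "\<gamma> c \<in> L" by blast
      have cc: "b \<in> carrier G" "c \<in> carrier G" using ab Kc by blast+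
      have ac: "c \<otimes> inv b \<in> carrier G" using cc by simp
      have "(c \<otimes> inv b) \<otimes> b = c" using cc by (simp add: m_assoc)
      then have "pcollinear (\<alpha> (c \<otimes> inv b)) (\<beta> b) (\<gamma> c)" using coll[OF ac cc(1) cc(2)] by simp
      then have "pcollinear (\<beta> b) (\<gamma> c) (\<alpha> (c \<otimes> inv b))" using pcollinear_cyc by blast
      moreover have "\<beta> b \<noteq> \<gamma> c" using D(3) ab by blast
      moreover have "is_point (\<alpha> (c \<otimes> inv b))" using net_facts(4) in_L(1) ac by simp
      ultimately have "\<alpha> (c \<otimes> inv b) \<in> L" using line_collinear_mem[OF L ab(3) ab(4)] by blast
      then show ?thesis using ab c3[OF ab(1,2)] by blast
    qed
  qed
  have lc: "\<forall>k<3. card (L \<inter> [\<alpha> ` K, \<beta> ` K, \<gamma> ` K] ! k) = 1"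
    if L: "is_line L" and ex: "\<exists>i<3. \<exists>j<3. i \<noteq> j \<and> L \<inter> [\<alpha> ` K, \<beta> ` K, \<gamma> ` K] ! i \<noteq> {} \<and>
        L \<inter> [\<alpha> ` K, \<beta> ` K, \<gamma> ` K] ! j \<noteq> {}" for L
  proof -
    obtain i j where ij: "i < 3" "j < 3" "i \<noteq> j" "L \<inter> [\<alpha> ` K, \<beta> ` K, \<gamma> ` K] ! i \<noteq> {}"
      "L \<inter> [\<alpha> ` K, \<beta> ` K, \<gamma> ` K] ! j \<noteq> {}" using ex by blast
    have two: "(L \<inter> \<alpha> ` K \<noteq> {} \<and> L \<inter> \<beta> ` K \<noteq> {}) \<or>
      (L \<inter> \<alpha> ` K \<noteq> {} \<and> L \<inter> \<gamma> ` K \<noteq> {}) \<or> (L \<inter> \<beta> ` K \<noteq> {} \<and> L \<inter> \<gamma> ` K \<noteq> {})"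
      using ij less3[OF ij(1)] less3[OF ij(2)] by auto
    have m: "L \<inter> \<alpha> ` K \<noteq> {}" "L \<inter> \<beta> ` K \<noteq> {}" "L \<inter> \<gamma> ` K \<noteq> {}" using meets[OF L two] by blast+
    have big: "card (L \<inter> [L1, L2, L3] ! k) = 1" if "k < 3" for k
      using line_cond[OF L, of 0 1 k] m sub that by auto
    have one: "card (L \<inter> S) = 1" if "S \<subseteq> M" "finite M" "card (L \<inter> M) = 1" "L \<inter> S \<noteq> {}" for S M
    proof -
      have "card (L \<inter> S) \<le> 1" using that card_mono[of "L \<inter> M" "L \<inter> S"] by auto
      moreover have "finite (L \<inter> S)" using that finite_subset by (metis inf.cobounded2 inf_mono order_refl finite_Int)
      ultimately show ?thesis using that(4) by (metis card_0_eq le_neq_implies_less less_one)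
    qed
    have b0: "card (L \<inter> L1) = 1" using big[of 0] by simp
    have b1: "card (L \<inter> L2) = 1" using big[of 1] by simp
    have b2: "card (L \<inter> L3) = 1" using big[of 2] by simp
    have "card (L \<inter> \<alpha> ` K) = 1" using one[OF sub(1) net_facts(1) b0 m(1)] .
    moreover have "card (L \<inter> \<beta> ` K) = 1" using one[OF sub(2) net_facts(2) b1 m(2)] .
    moreover have "card (L \<inter> \<gamma> ` K) = 1" using one[OF sub(3) net_facts(3) b2 m(3)] .
    ultimately show ?thesis using less3 by fastforce
  qed
  show ?thesis unfolding dual_3net_def
  proof (intro conjI)
    show "\<forall>i<3. Ball ([\<alpha> ` K, \<beta> ` K, \<gamma> ` K] ! i) is_point \<and> finite ([\<alpha> ` K, \<beta> ` K, \<gamma> ` K] ! i) \<and>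
        card ([\<alpha> ` K, \<beta> ` K, \<gamma> ` K] ! i) = card K"
      using P1 P2 P3 less3 by fastforce
    show "\<forall>i<3. \<forall>j<3. i \<noteq> j \<longrightarrow> [\<alpha> ` K, \<beta> ` K, \<gamma> ` K] ! i \<inter> [\<alpha> ` K, \<beta> ` K, \<gamma> ` K] ! j = {}"
    proof (intro allI impI)
      fix i j :: nat assume "i < 3" "j < 3" "i \<noteq> j"
      then show "[\<alpha> ` K, \<beta> ` K, \<gamma> ` K] ! i \<inter> [\<alpha> ` K, \<beta> ` K, \<gamma> ` K] ! j = {}"
        using D less3[of i] less3[of j] by (auto simp: Int_commute)
    qed
    show "\<forall>L. is_line L \<longrightarrow> (\<exists>i<3. \<exists>j<3. i \<noteq> j \<and> L \<inter> [\<alpha> ` K, \<beta> ` K, \<gamma> ` K] ! i \<noteq> {} \<and>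
        L \<inter> [\<alpha> ` K, \<beta> ` K, \<gamma> ` K] ! j \<noteq> {}) \<longrightarrow> (\<forall>k<3. card (L \<inter> [\<alpha> ` K, \<beta> ` K, \<gamma> ` K] ! k) = 1)"
      using lc by blast
  qed
qed

end

context pnet begin

lemma struct11:
  obtains P Q R where "is_point P" "is_point Q" "is_point R" "\<not> pcollinear P Q R"
     "P \<noteq> Q" "Q \<noteq> R" "P \<noteq> R" "Aset \<one> = {Q,R}" "Bset \<one> = {R,P}" "Cset \<one> = {P,Q}"
proof -
  from struct[OF one_closed one_closed] obtain P Q R where h: "is_point P \<and> is_point Q \<and> is_point R \<and> \<not> pcollinear P Q R \<and>
     P \<noteq> Q \<and> Q \<noteq> R \<and> P \<noteq> R \<and>
     Aset \<one> = {Q,R} \<and> Bset \<one> = {R,P} \<and> Cset (\<one> \<otimes> \<one>) = {P,Q}"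
    by (elim exE conjE) (intro that, simp)
  then have "Cset \<one> = {P,Q}" "is_point P" "is_point Q" "is_point R" "\<not> pcollinear P Q R"
     "P \<noteq> Q" "Q \<noteq> R" "P \<noteq> R" "Aset \<one> = {Q,R}" "Bset \<one> = {R,P}" by simp_all
  then show ?thesis by (intro that)
qed

lemma L1_img: "L1 = \<alpha> ` carrier G" using bij(1) by (simp add: bij_betw_def)
lemma L2_img: "L2 = \<beta> ` carrier G" using bij(2) by (simp add: bij_betw_def)
lemma L3_img: "L3 = \<gamma> ` carrier G" using bij(3) by (simp add: bij_betw_def)

lemma onA: "a \<in> carrier G \<Longrightarrow> Aset a = {Q,R} \<Longrightarrow> \<alpha> a \<in> line_thru Q R"
proof -
  assume a: "a \<in> carrier G" and e: "Aset a = {Q,R}"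
  have "\<alpha> ` (a <# H) \<subseteq> line_thru Q R" by (rule linesA[OF a e])
  then show ?thesis using lcos_self[OF a] by (rule subsetD[OF _ imageI])
qed
lemma onB: "a \<in> carrier G \<Longrightarrow> Bset a = {R,P} \<Longrightarrow> \<beta> a \<in> line_thru R P"
proof -
  assume a: "a \<in> carrier G" and e: "Bset a = {R,P}"
  have "\<beta> ` (a <# H) \<subseteq> line_thru R P" by (rule linesB[OF a e])
  then show ?thesis using lcos_self[OF a] by (rule subsetD[OF _ imageI])
qed
lemma onC: "a \<in> carrier G \<Longrightarrow> Cset a = {P,Q} \<Longrightarrow> \<gamma> a \<in> line_thru P Q"
proof -
  assume a: "a \<in> carrier G" and e: "Cset a = {P,Q}"
  have "\<gamma> ` (a <# H) \<subseteq> line_thru P Q" by (rule linesC[OF a e])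
  then show ?thesis using lcos_self[OF a] by (rule subsetD[OF _ imageI])
qed

lemma triangular_case:
  assumes allE: "\<forall>x\<in>carrier G. E x = {}"
  shows "triangular L1 L2 L3"
proof -
  obtain P Q R where h: "is_point P" "is_point Q" "is_point R" "\<not> pcollinear P Q R"
     "P \<noteq> Q" "Q \<noteq> R" "P \<noteq> R" "Aset \<one> = {Q,R}" "Bset \<one> = {R,P}" "Cset \<one> = {P,Q}"
    using struct11 by blast
  have A: "Aset x = {Q,R}" if "x \<in> carrier G" for x using A_from_E[OF that] allE that h(8) by (simp add: sd_def)
  have B: "Bset x = {R,P}" if "x \<in> carrier G" for x using B_from_E[OF that] allE that h(9) by (simp add: sd_def)
  have C: "Cset x = {P,Q}" if "x \<in> carrier G" for x using C_from_E[OF that] allE that h(10) by (simp add: sd_def)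
  have "L1 \<subseteq> line_thru Q R"
  proof
    fix X assume "X \<in> L1"
    then obtain a where a: "a \<in> carrier G" "X = \<alpha> a" using L1_img by blast
    show "X \<in> line_thru Q R" using onA[OF a(1) A[OF a(1)]] a(2) by simp
  qed
  moreover have "L2 \<subseteq> line_thru P R"
  proof
    fix X assume "X \<in> L2"
    then obtain a where a: "a \<in> carrier G" "X = \<beta> a" using L2_img by blast
    show "X \<in> line_thru P R" using onB[OF a(1) B[OF a(1)]] a(2) line_thru_sym[of R P] by simp
  qed
  moreover have "L3 \<subseteq> line_thru P Q"
  proof
    fix X assume "X \<in> L3"
    then obtain a where a: "a \<in> carrier G" "X = \<gamma> a" using L3_img by blast
    show "X \<in> line_thru P Q" using onC[OF a(1) C[OF a(1)]] a(2) by simp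
  qed
  ultimately show ?thesis unfolding triangular_def using h(1-4) by (intro exI[of _ P] exI[of _ Q] exI[of _ R]) simp
qed

end

lemma pcol_perm: "\<not> pcollinear A B C \<Longrightarrow> \<not> pcollinear B A C \<and> \<not> pcollinear A C B \<and> \<not> pcollinear B C A \<and>
    \<not> pcollinear C A B \<and> \<not> pcollinear C B A"
  using pcollinear_12[of A B C] pcollinear_23[of A B C] pcollinear_cyc[of A B C] pcollinear_cyc[of B C A]
    pcollinear_23[of C A B] by blast

lemma line_ne:
  assumes "is_point U" "is_point V" "\<not> pcollinear X Y U"
  shows "line_thru X Y \<noteq> line_thru U V" "line_thru X Y \<noteq> line_thru V U"
proof -
  have "U \<notin> line_thru X Y" using assms(3) by (simp add: line_thru_def)
  moreover have "U \<in> line_thru U V" "U \<in> line_thru V U" using line_thru_mem1[OF assms(1,2)] line_thru_mem2[OF assms(2,1)] by simp_all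
  ultimately show "line_thru X Y \<noteq> line_thru U V" "line_thru X Y \<noteq> line_thru V U" by auto
qed

context pnet begin

lemma tri_noncol:
  assumes x: "x \<in> carrier G" and y: "y \<in> carrier G" and A: "Aset x = {V1,V2}" and B: "Bset y = {V2,V3}"
  shows "\<not> pcollinear V1 V2 V3"
proof -
  from struct[OF x y] obtain P Q R where h: "is_point P \<and> is_point Q \<and> is_point R \<and> \<not> pcollinear P Q R \<and>
     P \<noteq> Q \<and> Q \<noteq> R \<and> P \<noteq> R \<and>
     Aset x = {Q,R} \<and> Bset y = {R,P} \<and> Cset (x \<otimes> y) = {P,Q}"
    by (elim exE conjE) (intro that, simp)
  then have h2: "\<not> pcollinear P Q R" "P \<noteq> Q" "Q \<noteq> R" "P \<noteq> R" "{Q,R} = {V1,V2}" "{R,P} = {V2,V3}"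
    using A B by simp_all
  have v: "V2 = R \<and> V1 = Q \<and> V3 = P" using h2(2-6) by (auto simp: doubleton_eq_iff)
  show ?thesis using v pcol_perm[OF h2(1)] by simp
qed

lemma Aset_pts: "x \<in> carrier G \<Longrightarrow> V \<in> Aset x \<Longrightarrow> is_point V"
proof -
  assume x: "x \<in> carrier G" and V: "V \<in> Aset x"
  from struct[OF x one_closed] obtain P Q R where h: "is_point P \<and> is_point Q \<and> is_point R \<and> \<not> pcollinear P Q R \<and>
     P \<noteq> Q \<and> Q \<noteq> R \<and> P \<noteq> R \<and>
     Aset x = {Q,R} \<and> Bset \<one> = {R,P} \<and> Cset (x \<otimes> \<one>) = {P,Q}"
    by (elim exE conjE) (intro that, simp)
  then have "is_point Q" "is_point R" "Aset x = {Q,R}" by simp_all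
  then show ?thesis using V by auto
qed

end

context pnet begin

lemma tetra_case:
  assumes x0: "x0 \<in> carrier G" and ne: "E x0 \<noteq> {}"
  shows "tetrahedron_type L1 L2 L3"
proof -
  obtain P Q R where h: "is_point P" "is_point Q" "is_point R" "\<not> pcollinear P Q R"
     "P \<noteq> Q" "Q \<noteq> R" "P \<noteq> R" "Aset \<one> = {Q,R}" "Bset \<one> = {R,P}" "Cset \<one> = {P,Q}"
    using struct11 by blast
  from E_dich[OF x0 ne h(8) h(9) h(10) h(5) h(6) h(7)] obtain W where
    W0: "W \<notin> {P,Q,R} \<and> E x0 = {P,Q,R,W} \<and> (\<forall>x\<in>carrier G. E x = {} \<or> E x = {P,Q,R,W})"
    by (elim exE) (intro that)
  then have W: "W \<notin> {P,Q,R}" "E x0 = {P,Q,R,W}" "\<And>x. x \<in> carrier G \<Longrightarrow> E x = {} \<or> E x = {P,Q,R,W}"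
    by simp_all
  define K where "K = {x \<in> carrier G. E x = {}}"
  have Kc: "K \<subseteq> carrier G" unfolding K_def by blast
  have x0K: "x0 \<notin> K" using ne unfolding K_def by blast
  have nK: "x \<in> carrier G \<Longrightarrow> x \<notin> K \<Longrightarrow> E x = {P,Q,R,W}" for x using W(3) unfolding K_def by blast
  have AK: "Aset x = {Q,R}" if "x \<in> K" for x
    using A_from_E[of x] that h(8) unfolding K_def by (simp add: sd_def)
  have BK: "Bset x = {R,P}" if "x \<in> K" for x
    using B_from_E[of x] that h(9) unfolding K_def by (simp add: sd_def)
  have CK: "Cset x = {P,Q}" if "x \<in> K" for x
    using C_from_E[of x] that h(10) unfolding K_def by (simp add: sd_def)
  have AnK: "Aset x = {P,W}" if "x \<in> carrier G" "x \<notin> K" for x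
    using A_from_E[OF that(1)] nK[OF that] h(8) h(5-7) W(1) by (auto simp: sd_def)
  have BnK: "Bset x = {Q,W}" if "x \<in> carrier G" "x \<notin> K" for x
    using B_from_E[OF that(1)] nK[OF that] h(9) h(5-7) W(1) by (auto simp: sd_def)
  have CnK: "Cset x = {R,W}" if "x \<in> carrier G" "x \<notin> K" for x
    using C_from_E[OF that(1)] nK[OF that] h(10) h(5-7) W(1) by (auto simp: sd_def)
  have c1: "a \<otimes> b \<in> K" if "a \<in> K" "b \<in> K" for a b
  proof -
    have "a \<in> carrier G" "b \<in> carrier G" "E a = {}" "E b = {}" using that unfolding K_def by auto
    then show ?thesis using Ehom[of a b] unfolding K_def by (simp add: sd_def)
  qed
  have c2: "inv a \<otimes> c \<in> K" if "a \<in> K" "c \<in> K" for a c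
  proof -
    have ac: "a \<in> carrier G" "c \<in> carrier G" "E a = {}" "E c = {}" using that unfolding K_def by auto
    have i: "inv a \<otimes> c \<in> carrier G" using ac by simp
    have "a \<otimes> (inv a \<otimes> c) = c" using ac by (simp add: mult_inv_cancel)
    then have "E c = sd (E a) (E (inv a \<otimes> c))" using Ehom[OF ac(1) i] by simp
    then have "E (inv a \<otimes> c) = {}" using ac by (simp add: sd_def)
    then show ?thesis using i unfolding K_def by simp
  qed
  have c3: "c \<otimes> inv b \<in> K" if "b \<in> K" "c \<in> K" for b c
  proof -
    have bc: "b \<in> carrier G" "c \<in> carrier G" "E b = {}" "E c = {}" using that unfolding K_def by auto
    have i: "c \<otimes> inv b \<in> carrier G" using bc by simp
    have "(c \<otimes> inv b) \<otimes> b = c" using bc by (simp add: m_assoc)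
    then have "E c = sd (E (c \<otimes> inv b)) (E b)" using Ehom[OF i bc(1)] by simp
    then have "E (c \<otimes> inv b) = {}" using bc by (simp add: sd_def)
    then show ?thesis using i unfolding K_def by simp
  qed
  have SN: "dual_3net (card K) (\<alpha> ` K) (\<beta> ` K) (\<gamma> ` K)" using subnet[OF Kc c1 c2 c3] .
  have bijK: "bij_betw (\<lambda>x. x0 \<otimes> x) K (carrier G - K)"
  proof (rule bij_betwI[where g = "\<lambda>y. inv x0 \<otimes> y"])
    show "(\<lambda>x. x0 \<otimes> x) \<in> K \<rightarrow> carrier G - K"
    proof
      fix x assume xK: "x \<in> K"
      then have xc: "x \<in> carrier G" "E x = {}" unfolding K_def by auto
      have "E (x0 \<otimes> x) = E x0" using Ehom[OF x0 xc(1)] xc(2) by (simp add: sd_def)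
      then show "x0 \<otimes> x \<in> carrier G - K" using ne x0 xc(1) unfolding K_def by simp
    qed
    show "(\<lambda>y. inv x0 \<otimes> y) \<in> carrier G - K \<rightarrow> K"
    proof
      fix y assume yK: "y \<in> carrier G - K"
      have yc: "y \<in> carrier G" "E y = {P,Q,R,W}" using yK nK by auto
      have i: "inv x0 \<otimes> y \<in> carrier G" using x0 yc by simp
      have "x0 \<otimes> (inv x0 \<otimes> y) = y" using x0 yc by (simp add: mult_inv_cancel)
      then have e: "E y = sd (E x0) (E (inv x0 \<otimes> y))" using Ehom[OF x0 i] by simp
      have "E (inv x0 \<otimes> y) = {}"
      proof (rule ccontr)
        assume "E (inv x0 \<otimes> y) \<noteq> {}"
        then have "E (inv x0 \<otimes> y) = {P,Q,R,W}" using W(3)[OF i] by blast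
        then have "E y = {}" using e W(2) by (simp add: sd_def)
        then show False using yc by simp
      qed
      then show "inv x0 \<otimes> y \<in> K" using i unfolding K_def by simp
    qed
    show "inv x0 \<otimes> (x0 \<otimes> x) = x" if "x \<in> K" for x using that Kc x0 by (simp add: inv_mult_cancel2 subsetD)
    show "x0 \<otimes> (inv x0 \<otimes> y) = y" if "y \<in> carrier G - K" for y using that x0 by (simp add: mult_inv_cancel)
  qed
  have cK: "card (carrier G) = 2 * card K"
  proof -
    have "card (carrier G - K) = card K" using bij_betw_same_card[OF bijK] by simp
    moreover have "card (carrier G) = card K + card (carrier G - K)"
      using Kc fin card_Diff_subset[of K "carrier G"] finite_subset[OF Kc fin]
      by (metis add.commute card_mono le_add_diff_inverse)
    ultimately show ?thesis by simp
  qed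
  have netK: "dual_3net (2 * card K) L1 L2 L3" using net cK by (simp add: order_def)
  have Wp: "is_point W"
  proof -
    have "x0 \<notin> K" by (rule x0K)
    then have "Aset x0 = {P,W}" using AnK[OF x0] by simp
    then show ?thesis using Aset_pts[OF x0, of W] by simp
  qed
  have oneK: "\<one> \<in> K" using E_one unfolding K_def by simp
  have n1: "\<not> pcollinear Q R P" using tri_noncol[OF one_closed one_closed h(8) h(9)] .
  have n2: "\<not> pcollinear Q R W"
  proof -
    have "Aset \<one> = {R,Q}" "Bset x0 = {Q,W}" using h(8) BnK[OF x0 x0K] by auto
    then have "\<not> pcollinear R Q W" by (rule tri_noncol[OF one_closed x0])
    then show ?thesis using pcol_perm[of R Q W] by simp
  qed
  have n3: "\<not> pcollinear Q P W"
  proof -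
    have "Aset x0 = {P,W}" "Bset x0 = {W,Q}" using AnK[OF x0 x0K] BnK[OF x0 x0K] by auto
    then have "\<not> pcollinear P W Q" by (rule tri_noncol[OF x0 x0])
    then show ?thesis using pcol_perm[of P W Q] by simp
  qed
  have n4: "\<not> pcollinear R P W"
  proof -
    have "Aset x0 = {W,P}" "Bset \<one> = {P,R}" using AnK[OF x0 x0K] h(9) by auto
    then have "\<not> pcollinear W P R" by (rule tri_noncol[OF x0 one_closed])
    then show ?thesis using pcol_perm[of W P R] by simp
  qed
  have NQ: "nondeg_quadrangle Q R P W" unfolding nondeg_quadrangle_def using h(1-3) Wp n1 n2 n3 n4 by simp
  have pwr: "\<not> pcollinear P W R" using pcol_perm[OF n4] by simp
  have pwq: "\<not> pcollinear P W Q" using pcol_perm[OF n3] by simp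
  have rpq: "\<not> pcollinear R P Q" using pcol_perm[OF n1] by simp
  have qwp: "\<not> pcollinear Q W P" using pcol_perm[OF n3] by simp
  have qwr: "\<not> pcollinear Q W R" using pcol_perm[OF n2] by simp
  have qpr: "\<not> pcollinear Q P R" using pcol_perm[OF n1] by simp
  have d0: "line_thru Q R \<noteq> line_thru P W" using line_ne(1)[of P W Q R, OF h(1) Wp n1] .
  have d1: "line_thru Q R \<noteq> line_thru R P" using line_ne(2)[of P R Q R, OF h(1) h(3) n1] .
  have d2: "line_thru Q R \<noteq> line_thru Q W" using line_ne(2)[of W Q Q R, OF Wp h(2) n2] .
  have d3: "line_thru Q R \<noteq> line_thru Q P" using line_ne(2)[of P Q Q R, OF h(1) h(2) n1] .
  have d4: "line_thru Q R \<noteq> line_thru R W" using line_ne(2)[of W R Q R, OF Wp h(3) n2] .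
  have d5: "line_thru P W \<noteq> line_thru R P" using line_ne(1)[of R P P W, OF h(3) h(1) pwr] .
  have d6: "line_thru P W \<noteq> line_thru Q W" using line_ne(1)[of Q W P W, OF h(2) Wp pwq] .
  have d7: "line_thru P W \<noteq> line_thru Q P" using line_ne(1)[of Q P P W, OF h(2) h(1) pwq] .
  have d8: "line_thru P W \<noteq> line_thru R W" using line_ne(1)[of R W P W, OF h(3) Wp pwr] .
  have d9: "line_thru R P \<noteq> line_thru Q W" using line_ne(1)[of Q W R P, OF h(2) Wp rpq] .
  have d10: "line_thru R P \<noteq> line_thru Q P" using line_ne(1)[of Q P R P, OF h(2) h(1) rpq] .
  have d11: "line_thru R P \<noteq> line_thru R W" using line_ne(2)[of W R R P, OF Wp h(3) n4] .
  have d12: "line_thru Q W \<noteq> line_thru Q P" using line_ne(2)[of P Q Q W, OF h(1) h(2) qwp] .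
  have d13: "line_thru Q W \<noteq> line_thru R W" using line_ne(1)[of R W Q W, OF h(3) Wp qwr] .
  have d14: "line_thru Q P \<noteq> line_thru R W" using line_ne(1)[of R W Q P, OF h(3) Wp qpr] .
  note d = d0 d1 d2 d3 d4 d5 d6 d7 d8 d9 d10 d11 d12 d13 d14
  have c6: "card {line_thru Q R, line_thru P W, line_thru R P, line_thru Q W, line_thru Q P, line_thru R W} = 6"
    using d by (simp add: card_insert_if)
  have opp: "(line_thru Q R, line_thru P W) \<in> opposite_sides Q R P W"
    "(line_thru R P, line_thru Q W) \<in> opposite_sides Q R P W"
    "(line_thru Q P, line_thru R W) \<in> opposite_sides Q R P W"
    by (simp_all add: opposite_sides_def)
  have i1: "\<alpha> ` K \<subseteq> line_thru Q R"
  proof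
    fix X assume "X \<in> \<alpha> ` K"
    then obtain a where a: "a \<in> K" "X = \<alpha> a" by blast
    show "X \<in> line_thru Q R" using onA[OF subsetD[OF Kc a(1)] AK[OF a(1)]] a(2) by simp
  qed
  have i2: "L1 - \<alpha> ` K \<subseteq> line_thru P W"
  proof
    fix X assume X: "X \<in> L1 - \<alpha> ` K"
    then obtain a where a: "a \<in> carrier G" "X = \<alpha> a" using L1_img by blast
    then have "a \<notin> K" using X by blast
    then show "X \<in> line_thru P W" using onA[OF a(1) AnK[OF a(1)]] a(2) by simp
  qed
  have i3: "\<beta> ` K \<subseteq> line_thru R P"
  proof
    fix X assume "X \<in> \<beta> ` K"
    then obtain a where a: "a \<in> K" "X = \<beta> a" by blast
    show "X \<in> line_thru R P" using onB[OF subsetD[OF Kc a(1)] BK[OF a(1)]] a(2) by simp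
  qed
  have i4: "L2 - \<beta> ` K \<subseteq> line_thru Q W"
  proof
    fix X assume X: "X \<in> L2 - \<beta> ` K"
    then obtain a where a: "a \<in> carrier G" "X = \<beta> a" using L2_img by blast
    then have "a \<notin> K" using X by blast
    then show "X \<in> line_thru Q W" using onB[OF a(1) BnK[OF a(1)]] a(2) by simp
  qed
  have i5: "\<gamma> ` K \<subseteq> line_thru Q P"
  proof
    fix X assume X: "X \<in> \<gamma> ` K"
    then obtain a where a: "a \<in> K" "X = \<gamma> a" by blast
    then have "\<gamma> a \<in> line_thru P Q" using onC[OF subsetD[OF Kc a(1)] CK[OF a(1)]] by simp
    then show "X \<in> line_thru Q P" using a line_thru_sym[of P Q] by simp
  qed
  have i6: "L3 - \<gamma> ` K \<subseteq> line_thru R W"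
  proof
    fix X assume X: "X \<in> L3 - \<gamma> ` K"
    then obtain a where a: "a \<in> carrier G" "X = \<gamma> a" using L3_img by blast
    then have "a \<notin> K" using X by blast
    then show "X \<in> line_thru R W" using onC[OF a(1) CnK[OF a(1)]] a(2) by simp
  qed
  have sub: "\<alpha> ` K \<subseteq> L1" "\<beta> ` K \<subseteq> L2" "\<gamma> ` K \<subseteq> L3"
    using in_L(1)[OF subsetD[OF Kc]] in_L(2)[OF subsetD[OF Kc]] in_L(3)[OF subsetD[OF Kc]] by auto
  have inner: "\<exists>S1 T1 S2 T2 S3 T3.
              (S1, T1) \<in> opposite_sides Q R P W \<and> (S2, T2) \<in> opposite_sides Q R P W \<and>
              (S3, T3) \<in> opposite_sides Q R P W \<and> card {S1, T1, S2, T2, S3, T3} = 6 \<and>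
              \<alpha> ` K \<subseteq> S1 \<and> L1 - \<alpha> ` K \<subseteq> T1 \<and> \<beta> ` K \<subseteq> S2 \<and> L2 - \<beta> ` K \<subseteq> T2 \<and>
              \<gamma> ` K \<subseteq> S3 \<and> L3 - \<gamma> ` K \<subseteq> T3"
    apply (rule exI[of _ "line_thru Q R"], rule exI[of _ "line_thru P W"])
    apply (rule exI[of _ "line_thru R P"], rule exI[of _ "line_thru Q W"])
    apply (rule exI[of _ "line_thru Q P"], rule exI[of _ "line_thru R W"])
    using opp c6 i1 i2 i3 i4 i5 i6 by (intro conjI)
  have quad: "\<exists>A B C D. nondeg_quadrangle A B C D \<and>
           (\<exists>S1 T1 S2 T2 S3 T3.
              (S1, T1) \<in> opposite_sides A B C D \<and> (S2, T2) \<in> opposite_sides A B C D \<and>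
              (S3, T3) \<in> opposite_sides A B C D \<and> card {S1, T1, S2, T2, S3, T3} = 6 \<and>
              \<alpha> ` K \<subseteq> S1 \<and> L1 - \<alpha> ` K \<subseteq> T1 \<and> \<beta> ` K \<subseteq> S2 \<and> L2 - \<beta> ` K \<subseteq> T2 \<and>
              \<gamma> ` K \<subseteq> S3 \<and> L3 - \<gamma> ` K \<subseteq> T3)"
    apply (rule exI[of _ Q], rule exI[of _ R], rule exI[of _ P], rule exI[of _ W])
    using NQ inner by (rule conjI)
  have gam: "\<exists>\<Gamma>1 \<Gamma>2 \<Gamma>3. \<Gamma>1 \<subseteq> L1 \<and> \<Gamma>2 \<subseteq> L2 \<and> \<Gamma>3 \<subseteq> L3 \<and> dual_3net (card K) \<Gamma>1 \<Gamma>2 \<Gamma>3 \<and>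
         (\<exists>A B C D. nondeg_quadrangle A B C D \<and>
           (\<exists>S1 T1 S2 T2 S3 T3.
              (S1, T1) \<in> opposite_sides A B C D \<and> (S2, T2) \<in> opposite_sides A B C D \<and>
              (S3, T3) \<in> opposite_sides A B C D \<and> card {S1, T1, S2, T2, S3, T3} = 6 \<and>
              \<Gamma>1 \<subseteq> S1 \<and> L1 - \<Gamma>1 \<subseteq> T1 \<and> \<Gamma>2 \<subseteq> S2 \<and> L2 - \<Gamma>2 \<subseteq> T2 \<and>
              \<Gamma>3 \<subseteq> S3 \<and> L3 - \<Gamma>3 \<subseteq> T3))"
    apply (rule exI[of _ "\<alpha> ` K"], rule exI[of _ "\<beta> ` K"], rule exI[of _ "\<gamma> ` K"])
    using sub SN quad by (intro conjI)
  show ?thesis unfolding tetrahedron_type_def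
    apply (rule exI[of _ "card K"])
    using netK gam by (rule conjI)
qed

end

context group begin

lemma num_elems_of_ord_eq_phi'':
  assumes finite: "finite (carrier G)"
      and roots: "\<And>d. 0 < d \<Longrightarrow> card {x \<in> carrier G. x [^] d = \<one>} \<le> d"
      and dvd: "d dvd order G"
      and exists: "\<exists>a\<in>carrier G. ord a = d"
  shows "card {a \<in> carrier G. ord a = d} = phi' d"
proof -
  from exists obtain a where a: "a \<in> carrier G" and ord_a: "ord a = d" by auto
  have opos: "0 < order G" using finite order_gt_0_iff_finite by blast
  have dpos: "0 < d" using dvd opos dvd_pos_nat by blast
  have set_eq1: "{a[^]n| n. n \<in> {1 .. d}} = {x \<in> carrier G. x [^] d = \<one>}"
  proof (rule card_seteq)
    show "finite {x \<in> carrier G. x [^] d = \<one>}" using finite by auto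
    show "{a[^]n| n. n \<in> {1 ..d}} \<subseteq> {x \<in> carrier G. x[^]d = \<one>}"
    proof
      fix x assume "x \<in> {a[^]n | n. n \<in> {1 .. d}}"
      then obtain n where n: "x = a[^]n \<and> n \<in> {1 .. d}" by auto
      have "x[^]d =(a[^]d)[^]n" using n a ord_a by (simp add:nat_pow_pow mult.commute)
      hence "x[^]d = \<one>" using ord_a pow_ord_eq_1[OF a] by fastforce
      thus "x \<in> {x \<in> carrier G. x[^]d = \<one>}" using nat_pow_closed[OF a] n by blast
    qed
    show "card {x \<in> carrier G. x [^] d = \<one>} \<le> card {a[^]n | n. n \<in> {1 .. d}}"
    proof -
      have *: "{a[^]n | n. n \<in> {1 .. d }} = ((\<lambda> n. a[^]n) ` {1 .. d})" by auto
      have "card {x \<in> carrier G. x [^] d = \<one>} \<le> d" using roots[OF dpos] .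
      then show ?thesis using ord_inj'[OF a] ord_a * by (simp add: card_image)
    qed
  qed
  have set_eq2: "{x \<in> carrier G . ord x = d}
                = (\<lambda> n . a[^]n) ` {n \<in> {1 .. d}. ord (a[^]n) = d}" (is "?L = ?R")
  proof
    have "x \<in> ?R" if x: "x \<in> carrier G \<and> ord x = d" for x
    proof -
      from that have "x \<in> {x \<in> carrier G. x [^] d = \<one>}"
        by (simp add: pow_ord_eq_1[of x, symmetric])
      then obtain n where n: "x = a[^]n \<and> n \<in> {1 .. d}" using set_eq1 by blast
      then show ?thesis using x by fast
    qed
    thus "?L \<subseteq> ?R" by blast
    show "?R \<subseteq> ?L" using a by auto
  qed
  have "inj_on (\<lambda> n . a[^]n) {n \<in> {1 .. d}. ord (a[^]n) = d}"
    using ord_inj'[OF a, unfolded ord_a] unfolding inj_on_def by fast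
  hence "card ((\<lambda>n. a[^]n) ` {n \<in> {1 .. d}. ord (a[^]n) = d})
         = card {k \<in> {1 .. d}. ord (a[^]k) = d}"
         using card_image by blast
  thus ?thesis using set_eq2 pow_ord_eq_ord_iff[OF finite \<open>a \<in> _\<close>, unfolded ord_a]
    by (simp add: phi'_def)
qed

theorem exists_generator:
  assumes finite: "finite (carrier G)"
      and roots: "\<And>d. 0 < d \<Longrightarrow> card {x \<in> carrier G. x [^] d = \<one>} \<le> d"
  shows "\<exists>a\<in>carrier G. ord a = order G"
proof -
  let ?N = "\<lambda> x . card {a \<in> carrier G. ord a  = x}"
  have *: "0 < order G" using finite order_gt_0_iff_finite by blast
  have fin: "finite {d. d dvd order G }" using dvd_nat_bounds[OF *] by force
  have "(\<Sum>d | d dvd order G. ?N d)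
      = card (UN d:{d . d dvd order G }. {a \<in> carrier G. ord a  = d})"
      (is "_ = card ?U")
    using fin finite by (subst card_UN_disjoint) auto
  also have "?U = carrier G"
  proof
    have "x \<in> ?U" if x: "x \<in> carrier G" for x
    proof -
      have "ord x dvd order G" using ord_dvd_group_order x by blast
      then show ?thesis using x by blast
    qed
    thus "carrier G \<subseteq> ?U" by blast
  qed auto
  also have "card ... = order G" by (simp add: order_def)
  finally have sum_Ns_eq: "(\<Sum>d | d dvd order G. ?N d) = order G" .
  have "card {a \<in> carrier G. ord a = d} \<le> phi' d" if d: "d dvd order G" for d
  proof (cases "card {a \<in> carrier G. ord a = d} = 0")
    case True
    thus ?thesis by presburger
  next
    case False
    hence "\<exists>a \<in> carrier G. ord a = d" by (auto simp: card_eq_0_iff)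
    thus ?thesis using num_elems_of_ord_eq_phi''[OF finite roots d] by auto
  qed
  hence all_le: "\<And>i. i \<in> {d. d dvd order G }
        \<Longrightarrow> (\<lambda>i. card {a \<in> carrier G. ord a = i}) i \<le> (\<lambda>i. phi' i) i" by fast
  hence le: "(\<Sum>i | i dvd order G. ?N i)
            \<le> (\<Sum>i | i dvd order G. phi' i)"
            using sum_mono[of "{d .  d dvd order G}"
                  "\<lambda>i. card {a \<in> carrier G. ord a = i}"] by presburger
  have "order G = (\<Sum>d | d dvd order G. phi' d)" using *
    by (simp add: sum_phi'_factors)
  hence eq: "(\<Sum>i | i dvd order G. ?N i)
          = (\<Sum>i | i dvd order G. phi' i)" using le sum_Ns_eq by presburger
  have "\<And>i. i \<in> {d. d dvd order G } \<Longrightarrow> ?N i = (\<lambda>i. phi' i) i"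
  proof (rule ccontr)
    fix i
    assume i1: "i \<in> {d. d dvd order G}" and "?N i \<noteq> phi' i"
    hence "?N i = 0"
      using num_elems_of_ord_eq_phi''[OF finite roots, of i] by (auto simp: card_eq_0_iff)
    moreover  have "0 < i" using * i1 by (simp add: dvd_nat_bounds[of "order G" i])
    ultimately have "?N i < phi' i" using phi'_nonzero by presburger
    hence "(\<Sum>i | i dvd order G. ?N i)
         < (\<Sum>i | i dvd order G. phi' i)"
      using sum_strict_mono_ex1[OF fin, of "?N" "\<lambda> i . phi' i"]
            i1 all_le by auto
    thus False using eq by force
  qed
  hence "?N (order G) > 0" using * by (simp add: phi'_nonzero)
  then show ?thesis by (auto simp add: card_gt_0_iff)
qed

theorem cyclic_if_few_roots:
  assumes finite: "finite (carrier G)"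
      and roots: "\<And>d. 0 < d \<Longrightarrow> card {x \<in> carrier G. x [^] d = \<one>} \<le> d"
  shows "cyclic_group G"
proof -
  obtain a where a: "a \<in> carrier G" "ord a = order G" using exists_generator[OF finite roots] by blast
  have "card (generate G {a}) = card (carrier G)" using generate_pow_card[OF a(1)] a(2) by (simp add: order_def)
  moreover have "generate G {a} \<subseteq> carrier G" using a(1) generate_incl by blast
  ultimately have g: "generate G {a} = carrier G" using finite card_subset_eq by blast
  have "subgroup_generated G {a} = G"
    unfolding subgroup_generated_def using a(1) g by simp
  then show ?thesis unfolding cyclic_group_def using a(1) by blast
qed

end

lemma roots_unity_card:
  fixes d :: nat assumes "0 < d"
  shows "finite {z::'k::field. z ^ d = 1} \<and> card {z::'k::field. z ^ d = 1} \<le> d"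
proof -
  let ?p = "Polynomial.monom (1::'k) d - 1"
  have ev: "poly ?p z = z ^ d - 1" for z by (simp add: poly_monom)
  have e: "?p = Polynomial.monom 1 d + (- 1)" by simp
  have "degree (- 1 :: 'k poly) < degree (Polynomial.monom (1::'k) d)" using assms by (simp add: degree_monom_eq)
  then have deg: "degree ?p = d" using e degree_add_eq_left degree_monom_eq by (metis one_neq_zero)
  have nz: "?p \<noteq> 0" using deg assms by auto
  have eq: "{z::'k. z ^ d = 1} = {x. poly ?p x = 0}" using ev by auto
  show ?thesis using poly_roots_finite[OF nz] card_poly_roots_bound[OF nz] deg eq by simp
qed

context pnet begin

lemma lcos_one: "\<one> <# H = H"
  using lcos_iff H_carr by auto

lemma cyclicH: "cyclic_group (subgroup_generated G H)"
proof -
  obtain p q r s t u where T: "ctri \<one> \<one> p q r s t u" using ctri_exists[OF one_closed one_closed] by blast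
  have A: "s h \<noteq> 0" if "h \<in> H" for h using ctri_A[OF T] that lcos_one by auto
  define \<mu> where "\<mu> h = s h / s \<one>" for h
  have s1: "s \<one> \<noteq> 0" using A H_one by blast
  have sc: "s (a \<otimes> h) = (t \<one> / t (inv h \<otimes> \<one>)) * s a" if "a \<in> H" "h \<in> H" for a h
    using scaleA[OF T one_closed one_closed that(2)] that(1) lcos_one by simp
  have hom: "\<mu> (a \<otimes> h) = \<mu> a * \<mu> h" if "a \<in> H" "h \<in> H" for a h
  proof -
    have "s h = (t \<one> / t (inv h \<otimes> \<one>)) * s \<one>" using sc[OF H_one that(2)] H_carr[OF that(2)] by simp
    then have "t \<one> / t (inv h \<otimes> \<one>) = \<mu> h" using s1 unfolding \<mu>_def by (simp add: field_simps)
    then show ?thesis using sc[OF that] unfolding \<mu>_def by (simp add: field_simps)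
  qed
  have mu_nz: "\<mu> h \<noteq> 0" if "h \<in> H" for h using A[OF that] s1 unfolding \<mu>_def by simp
  have mu_inj: "inj_on \<mu> H"
  proof (rule inj_onI)
    fix a b assume ab: "a \<in> H" "b \<in> H" "\<mu> a = \<mu> b"
    then have "s a = s b" using s1 unfolding \<mu>_def by simp
    then show "a = b" using ctri_injA[OF T one_closed] ab lcos_one by simp
  qed
  have mu_one: "\<mu> \<one> = 1" using s1 unfolding \<mu>_def by simp
  have pow_H: "h [^] n \<in> H" if "h \<in> H" for h and n :: nat
  proof (induction n)
    case 0 then show ?case using H_one by simp
  next
    case (Suc n) then show ?case using H_mult that by (simp add: nat_pow_Suc)
  qed
  have mu_pow: "\<mu> (h [^] n) = (\<mu> h) ^ n" if "h \<in> H" for h and n :: nat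
  proof (induction n)
    case 0 then show ?case using mu_one by simp
  next
    case (Suc n)
    have "h [^] Suc n = h [^] n \<otimes> h" by (simp add: nat_pow_Suc)
    then show ?case using hom[OF pow_H[OF that] that] Suc by simp
  qed
  let ?S = "subgroup_generated G H"
  have gS: "group ?S" by simp
  have cS: "carrier ?S = H" using subgroup.carrier_subgroup_generated_subgroup[OF H_subgroup] .
  have oneS: "\<one>\<^bsub>?S\<^esub> = \<one>" by (simp add: subgroup_generated_def)
  have powS: "(x [^]\<^bsub>?S\<^esub> (n::nat)) = x [^] n" for x n by (simp add: pow_subgroup_generated)
  have roots: "card {x \<in> carrier ?S. x [^]\<^bsub>?S\<^esub> d = \<one>\<^bsub>?S\<^esub>} \<le> d" if d: "0 < d" for d :: nat
  proof -
    have eqS: "{x \<in> carrier ?S. x [^]\<^bsub>?S\<^esub> d = \<one>\<^bsub>?S\<^esub>} = {x \<in> H. x [^] d = \<one>}"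
      using cS oneS powS by simp
    have "\<mu> ` {x \<in> H. x [^] d = \<one>} \<subseteq> {z. z ^ d = 1}"
    proof
      fix z assume "z \<in> \<mu> ` {x \<in> H. x [^] d = \<one>}"
      then obtain x where x: "x \<in> H" "x [^] d = \<one>" "z = \<mu> x" by blast
      have "z ^ d = \<mu> (x [^] d)" using mu_pow[OF x(1)] x(3) by simp
      then show "z \<in> {z. z ^ d = 1}" using x(2) mu_one by simp
    qed
    moreover have "inj_on \<mu> {x \<in> H. x [^] d = \<one>}" by (rule inj_on_subset[OF mu_inj]) auto
    moreover have "finite {z. z ^ d = (1::'k)}" using roots_unity_card[OF d] by blast
    ultimately have "card (\<mu> ` {x \<in> H. x [^] d = \<one>}) \<le> card {z. z ^ d = (1::'k)}"
      by (intro card_mono) auto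
    then have "card {x \<in> H. x [^] d = \<one>} \<le> card {z. z ^ d = (1::'k)}"
      using card_image[OF \<open>inj_on \<mu> {x \<in> H. x [^] d = \<one>}\<close>] by simp
    also have "\<dots> \<le> d" using roots_unity_card[OF d] by blast
    finally show ?thesis using eqS by simp
  qed
  have fS: "finite (carrier ?S)" using cS fin_H by simp
  show ?thesis by (rule group.cyclic_if_few_roots[OF gS fS roots])
qed

end

context pnet begin

lemma main_result:
  "cyclic_group (subgroup_generated G H) \<and> (triangular L1 L2 L3 \<or> tetrahedron_type L1 L2 L3)"
proof (cases "\<forall>x\<in>carrier G. E x = {}")
  case True
  then show ?thesis using cyclicH triangular_case by blast
next
  case False
  then obtain x0 where "x0 \<in> carrier G" "E x0 \<noteq> {}" by blast
  then show ?thesis using cyclicH tetra_case by blast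
qed

end

theorem proposition6p8:
  fixes G :: "'g monoid" and H :: "'g set"
    and \<Lambda>1 \<Lambda>2 \<Lambda>3 :: "'k::alg_closed_field ppoint set"
    and \<alpha> \<beta> \<gamma> :: "'g \<Rightarrow> 'k ppoint"
  assumes char: "CHAR('k) = 0 \<or> CHAR('k) \<ge> 5"
    and grp: "group G" and fin: "finite (carrier G)"
    and nrm: "H \<lhd> G" and ord: "card H \<ge> 3"
    and net: "dual_3net (order G) \<Lambda>1 \<Lambda>2 \<Lambda>3"
    and real: "realizes G \<Lambda>1 \<Lambda>2 \<Lambda>3 \<alpha> \<beta> \<gamma>"
    and small: "CHAR('k) > 0 \<longrightarrow> order G < CHAR('k)"
    and sub: "\<forall>g1\<in>carrier G. \<forall>g2\<in>carrier G.
               triangular (\<alpha> ` (g1 <#\<^bsub>G\<^esub> H)) (\<beta> ` (g2 <#\<^bsub>G\<^esub> H))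
                          (\<gamma> ` ((g1 \<otimes>\<^bsub>G\<^esub> g2) <#\<^bsub>G\<^esub> H))"
  shows "cyclic_group (subgroup_generated G H) \<and>
         (triangular \<Lambda>1 \<Lambda>2 \<Lambda>3 \<or> tetrahedron_type \<Lambda>1 \<Lambda>2 \<Lambda>3)"
proof -
  have "pnet G H \<Lambda>1 \<Lambda>2 \<Lambda>3 \<alpha> \<beta> \<gamma>"
    unfolding pnet_def pnet_axioms_def using grp fin nrm ord net real sub by blast
  then show ?thesis by (rule pnet.main_result)
qed

end
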